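(* For all $\mathbf U,\mathbf V\in\mathcal E([0,T];\mathcal A_X^{\otimes2})$, $$\varphi\big(\delta^X(\mathbf U)\,\delta^X(\mathbf V)^*\big)=(\varphi\times\varphi)\big(\langle\mathbf U;\mathbf V^*\rangle_{\mathcal H}\big)+(\varphi\times\varphi\times\varphi)\big(\mathcal T_{\mathcal H}(\mathbf U,\mathbf V)\big),$$ where $\mathcal T_{\mathcal H}:\mathcal E([0,T];\mathcal A_X^{\otimes2})^2\to\mathcal A_X^{\otimes3}$ is the bilinear extension of $$\mathcal T_{\mathcal H}(\mathbf Fh,\mathbf Gk):=\langle D^X_1\mathbf F,k\rangle_{\mathcal H}\cdot\langle(D^X_2\mathbf G)^*,h\rangle_{\mathcal H}+\langle D^X_2\mathbf F,k\rangle_{\mathcal H}\cdot\langle(D^X_1\mathbf G)^*,h\rangle_{\mathcal H}$$ for $\mathbf F,\mathbf G\in\mathcal A_X^{\otimes 2}$, $h,k\in\mathcal E([0,T];\mathbb R)$ (the product $\cdot$ being the componentwise product in $\mathcal A_X^{\otimes3}$).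
   Context: NC probability space: a pair $(\mathcal A,\varphi)$ with $\mathcal A$ a unital complex Banach $*$-algebra with $\|XY\|\le\|X\|\|Y\|$, $\|X^*X\|=\|X\|^2$, and $\varphi$ a linear functional with $\varphi(1)=1$, $\varphi(XY)=\varphi(YX)$, $\varphi(X^*X)\ge0$, $\varphi(X^*X)=0\Rightarrow X=0$. For $k\ge2$, $\mathcal A^{\otimes k}$ is the algebraic tensor product with componentwise product $(F_1\otimes\cdots\otimes F_k)\cdot(G_1\otimes\cdots\otimes G_k)=(F_1G_1)\otimes\cdots\otimes(F_kG_k)$, involution $(F_1\otimes\cdots\otimes F_k)^*=F_1^*\otimes\cdots\otimes F_k^*$, and $\varphi^{\times k}(F_1\otimes\cdots\otimes F_k)=\varphi(F_1)\cdots\varphi(F_k)$ (written $\varphi\times\varphi$, $\varphi\times\varphi\times\varphi$), all extended linearly. Also $(F_1\otimes F_2)\sharp G:=F_1GF_2$ and $(\mathrm{Id}\times\varphi\times\mathrm{Id})(F_1\otimes F_2\otimes F_3):=\varphi(F_2)F_1F_3$, extended linearly. A centered semicircular process $\{X_t\}_{t\in[0,T]}$ is a family of self-adjoint elements whose mixed moments satisfy the free Wick formula $\varphi(X_{t_1}\cdots X_{t_r})=\sum_{\pi\in NC_2(r)}\prod_{\{p,q\}\in\pi}\varphi(X_{t_p}X_{t_q})$ for even $r$ ($NC_2(r)$ = non-crossing pairings of $\{1,\dots,r\}$) and vanishing odd moments. Fix $T>0$ and a centered semicircular process $\{X_t\}_{t\in[0,T]}$ in $(\mathcal A,\varphi)$;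 $\mathcal A_X$ is the unital subalgebra generated by $\{X_t\}$. $\mathcal E([0,T];\mathbb R)$ is the space of step functions $h=\sum_i\alpha_i\mathbf 1_{[a_i,b_i)}$, and $X(h):=\sum_i\alpha_i(X_{b_i}-X_{a_i})$. $\mathcal H$ is the completion of $\mathcal E([0,T];\mathbb R)$ for the inner product determined by $\langle\mathbf 1_{[0,s]},\mathbf 1_{[0,t]}\rangle_{\mathcal H}=\varphi(X_sX_t)$. For an algebra $E$, $\mathcal E([0,T];E)$ is the set of finite sums $\sum_i x_ih_i$ with $x_i\in E$, $h_i$ step functions. Pairings: $\langle xh,k\rangle_{\mathcal H}=\langle h,xk\rangle_{\mathcal H}:=x\langle h,k\rangle_{\mathcal H}$ and $\langle xh;yk\rangle_{\mathcal H}:=(x\cdot y)\langle h,k\rangle_{\mathcal H}$, extended bilinearly; for $\mathbf U=\sum_ix_ih_i$, $\mathbf U^*:=\sum_ix_i^*h_i$. $D^X:\mathcal A_X\to\mathcal E([0,T];\mathcal A_X^{\otimes2})$ is the linear map with $D^X1=0$ and $D^X\big(X(h_1)\cdots X(h_m)\big)=\sum_{i=1}^m\big[(X(h_1)\cdots X(h_{i-1}))\otimes(X(h_{i+1})\cdots X(h_m))\big]h_i$ (empty products $=1$). For $F_1,F_2\in\mathcal A_X$, $D^X_1(F_1\otimes F_2):=D^XF_1\otimes F_2$, $D^X_2(F_1\otimes F_2):=F_1\otimes D^XF_2$ (in $\mathcal E([0,T];\mathcal A_X^{\otimes3})$), extended linearly, and $D^X:=D^X_1+D^X_2$. The divergence: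 $\delta^X(\mathbf Fh):=\mathbf F\sharp X(h)-(\mathrm{Id}\times\varphi\times\mathrm{Id})\big(\langle D^X\mathbf F,h\rangle_{\mathcal H}\big)$ for $\mathbf F\in\mathcal A_X^{\otimes2}$, $h$ a step function, extended linearly to $\mathcal E([0,T];\mathcal A_X^{\otimes2})$. *)

theory Defs
  imports "HOL-Analysis.Analysis"
begin

text \<open>A complex unital Banach algebra is modelled as a real unital Banach algebra
  together with a central element ii with ii * ii = -1 giving the complex scalar
  multiplication scaleC; the norm is required to be homogeneous for complex scalars.\<close>

definition scaleC :: "'a::real_algebra_1 \<Rightarrow> complex \<Rightarrow> 'a \<Rightarrow> 'a" where
  "scaleC ii c x = Re c *\<^sub>R x + Im c *\<^sub>R (ii * x)"

definition nc_prob_space ::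
  "'a::{real_normed_algebra_1,banach} \<Rightarrow> ('a \<Rightarrow> 'a) \<Rightarrow> ('a \<Rightarrow> complex) \<Rightarrow> bool" where
  "nc_prob_space ii st \<phi> \<longleftrightarrow>
     (\<forall>x. ii * x = x * ii) \<and> ii * ii = - 1 \<and>
     (\<forall>c x. norm (scaleC ii c x) = cmod c * norm x) \<and>
     (\<forall>x y. st (x + y) = st x + st y) \<and>
     (\<forall>c x. st (scaleC ii c x) = scaleC ii (cnj c) (st x)) \<and>
     (\<forall>x y. st (x * y) = st y * st x) \<and>
     (\<forall>x. st (st x) = x) \<and>
     (\<forall>x. norm (st x * x) = (norm x)^2) \<and>
     (\<forall>x y. \<phi> (x + y) = \<phi> x + \<phi> y) \<and>
     (\<forall>c x. \<phi> (scaleC ii c x) = c * \<phi> x) \<and>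
     \<phi> 1 = 1 \<and>
     (\<forall>x y. \<phi> (x * y) = \<phi> (y * x)) \<and>
     (\<forall>x. \<phi> (st x * x) \<in> \<real> \<and> Re (\<phi> (st x * x)) \<ge> 0) \<and>
     (\<forall>x. \<phi> (st x * x) = 0 \<longrightarrow> x = 0)"

definition nc_pairings :: "nat \<Rightarrow> (nat \<times> nat) set set" where
  "nc_pairings r = {\<pi>.
     (\<forall>pq\<in>\<pi>. fst pq < snd pq \<and> snd pq < r) \<and>
     (\<forall>i<r. \<exists>!pq. pq \<in> \<pi> \<and> (fst pq = i \<or> snd pq = i)) \<and>
     (\<forall>pq1\<in>\<pi>. \<forall>pq2\<in>\<pi>. \<not> (fst pq1 < fst pq2 \<and> fst pq2 < snd pq1 \<and> snd pq1 < snd pq2))}"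

definition semicircular_process ::
  "real \<Rightarrow> ('a::ring_1 \<Rightarrow> 'a) \<Rightarrow> ('a \<Rightarrow> complex) \<Rightarrow> (real \<Rightarrow> 'a) \<Rightarrow> bool" where
  "semicircular_process T st \<phi> X \<longleftrightarrow>
     (\<forall>t\<in>{0..T}. st (X t) = X t) \<and>
     (\<forall>ts. set ts \<subseteq> {0..T} \<longrightarrow>
        \<phi> (prod_list (map X ts)) =
          (if even (length ts)
           then (\<Sum>\<pi>\<in>nc_pairings (length ts). \<Prod>pq\<in>\<pi>. \<phi> (X (ts ! fst pq) * X (ts ! snd pq)))
           else 0))"

text \<open>A step function sum_i alpha_i 1_[a_i,b_i) is represented by the list of
  triples (alpha_i, a_i, b_i).\<close>

type_synonym step = "(real \<times> real \<times> real) list"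

definition valid_step :: "real \<Rightarrow> step \<Rightarrow> bool" where
  "valid_step T h \<longleftrightarrow> (\<forall>(\<alpha>, a, b)\<in>set h. 0 \<le> a \<and> a \<le> b \<and> b \<le> T)"

definition Xh :: "(real \<Rightarrow> 'a::real_vector) \<Rightarrow> step \<Rightarrow> 'a" where
  "Xh X h = sum_list (map (\<lambda>(\<alpha>, a, b). \<alpha> *\<^sub>R (X b - X a)) h)"

text \<open>Inner product of H on step functions: bilinear extension of
  <1_[0,s], 1_[0,t]> = phi(X_s X_t), via 1_[a,b) = 1_[0,b) - 1_[0,a).\<close>

definition innerH :: "('a::times \<Rightarrow> complex) \<Rightarrow> (real \<Rightarrow> 'a) \<Rightarrow> step \<Rightarrow> step \<Rightarrow> complex" where
  "innerH \<phi> X h k =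
     sum_list (map (\<lambda>(\<alpha>, a, b). sum_list (map (\<lambda>(\<beta>, c, d).
        complex_of_real (\<alpha> * \<beta>) *
          (\<phi> (X b * X d) - \<phi> (X b * X c) - \<phi> (X a * X d) + \<phi> (X a * X c))) k)) h)"

text \<open>A word [h_1,...,h_m] stands for the monomial X(h_1)...X(h_m) in A_X.
  Elements of A_X^{\<otimes>2} (resp. A_X^{\<otimes>3}) are represented as finite formal
  linear combinations of tensors of words.\<close>

type_synonym word = "step list"
type_synonym tensor2 = "(complex \<times> word \<times> word) list"
type_synonym tensor3 = "(complex \<times> word \<times> word \<times> word) list"

definition ev :: "(real \<Rightarrow> 'a::real_algebra_1) \<Rightarrow> word \<Rightarrow> 'a" where
  "ev X w = prod_list (map (Xh X) w)"

definition valid_word :: "real \<Rightarrow> word \<Rightarrow> bool" where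
  "valid_word T w \<longleftrightarrow> (\<forall>h\<in>set w. valid_step T h)"

definition valid_E2 :: "real \<Rightarrow> (tensor2 \<times> step) list \<Rightarrow> bool" where
  "valid_E2 T U \<longleftrightarrow> (\<forall>(F, h)\<in>set U. valid_step T h \<and>
      (\<forall>(c, u, v)\<in>set F. valid_word T u \<and> valid_word T v))"

text \<open>Involution: (X(h_1)...X(h_m))^* = X(h_m)...X(h_1) since X(h_i) self-adjoint.\<close>

definition t2star :: "tensor2 \<Rightarrow> tensor2" where
  "t2star F = map (\<lambda>(c, u, v). (cnj c, rev u, rev v)) F"

definition t3star :: "tensor3 \<Rightarrow> tensor3" where
  "t3star F = map (\<lambda>(c, u, v, w). (cnj c, rev u, rev v, rev w)) F"

definition t2mult :: "tensor2 \<Rightarrow> tensor2 \<Rightarrow> tensor2" where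
  "t2mult F G = concat (map (\<lambda>(c, u1, u2). map (\<lambda>(d, v1, v2). (c * d, u1 @ v1, u2 @ v2)) G) F)"

definition t3mult :: "tensor3 \<Rightarrow> tensor3 \<Rightarrow> tensor3" where
  "t3mult F G = concat (map (\<lambda>(c, u1, u2, u3).
      map (\<lambda>(d, v1, v2, v3). (c * d, u1 @ v1, u2 @ v2, u3 @ v3)) G) F)"

definition phi2 :: "('a::real_algebra_1 \<Rightarrow> complex) \<Rightarrow> (real \<Rightarrow> 'a) \<Rightarrow> tensor2 \<Rightarrow> complex" where
  "phi2 \<phi> X F = sum_list (map (\<lambda>(c, u, v). c * \<phi> (ev X u) * \<phi> (ev X v)) F)"

definition phi3 :: "('a::real_algebra_1 \<Rightarrow> complex) \<Rightarrow> (real \<Rightarrow> 'a) \<Rightarrow> tensor3 \<Rightarrow> complex" where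
  "phi3 \<phi> X F = sum_list (map (\<lambda>(c, u, v, w). c * \<phi> (ev X u) * \<phi> (ev X v) * \<phi> (ev X w)) F)"

text \<open>An element sum_i x_i h_i of E([0,T];E) is the list of pairs (x_i, h_i).\<close>

definition Estar2 :: "(tensor2 \<times> step) list \<Rightarrow> (tensor2 \<times> step) list" where
  "Estar2 U = map (\<lambda>(F, h). (t2star F, h)) U"

definition Estar3 :: "(tensor3 \<times> step) list \<Rightarrow> (tensor3 \<times> step) list" where
  "Estar3 U = map (\<lambda>(F, h). (t3star F, h)) U"

definition tscale :: "complex \<Rightarrow> (complex \<times> 'w) list \<Rightarrow> (complex \<times> 'w) list" where
  "tscale c F = map (\<lambda>(d, w). (c * d, w)) F"

definition pairH :: "('a::times \<Rightarrow> complex) \<Rightarrow> (real \<Rightarrow> 'a) \<Rightarrow>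
    ((complex \<times> 'w) list \<times> step) list \<Rightarrow> step \<Rightarrow> (complex \<times> 'w) list" where
  "pairH \<phi> X U k = concat (map (\<lambda>(F, h). tscale (innerH \<phi> X h k) F) U)"

definition pairHH :: "('a::times \<Rightarrow> complex) \<Rightarrow> (real \<Rightarrow> 'a) \<Rightarrow>
    (tensor2 \<times> step) list \<Rightarrow> (tensor2 \<times> step) list \<Rightarrow> tensor2" where
  "pairHH \<phi> X U V = concat (map (\<lambda>(F, h). concat (map (\<lambda>(G, k).
      tscale (innerH \<phi> X h k) (t2mult F G)) V)) U)"

definition DXw :: "word \<Rightarrow> (tensor2 \<times> step) list" where
  "DXw w = map (\<lambda>i. ([(1, take i w, drop (Suc i) w)], w ! i)) [0..<length w]"

definition D1 :: "tensor2 \<Rightarrow> (tensor3 \<times> step) list" where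
  "D1 F = concat (map (\<lambda>(c, u, v).
      map (\<lambda>(G, h). (map (\<lambda>(d, u1, u2). (c * d, u1, u2, v)) G, h)) (DXw u)) F)"

definition D2 :: "tensor2 \<Rightarrow> (tensor3 \<times> step) list" where
  "D2 F = concat (map (\<lambda>(c, u, v).
      map (\<lambda>(G, h). (map (\<lambda>(d, v1, v2). (c * d, u, v1, v2)) G, h)) (DXw v)) F)"

definition DX2 :: "tensor2 \<Rightarrow> (tensor3 \<times> step) list" where
  "DX2 F = D1 F @ D2 F"

definition sharp :: "'a::real_algebra_1 \<Rightarrow> (real \<Rightarrow> 'a) \<Rightarrow> tensor2 \<Rightarrow> 'a \<Rightarrow> 'a" where
  "sharp ii X F g = sum_list (map (\<lambda>(c, u, v). scaleC ii c (ev X u * g * ev X v)) F)"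

definition idphiid :: "'a::real_algebra_1 \<Rightarrow> ('a \<Rightarrow> complex) \<Rightarrow> (real \<Rightarrow> 'a) \<Rightarrow> tensor3 \<Rightarrow> 'a" where
  "idphiid ii \<phi> X F = sum_list (map (\<lambda>(c, u1, u2, u3).
      scaleC ii (c * \<phi> (ev X u2)) (ev X u1 * ev X u3)) F)"

definition deltaX :: "'a::real_algebra_1 \<Rightarrow> ('a \<Rightarrow> complex) \<Rightarrow> (real \<Rightarrow> 'a) \<Rightarrow>
    (tensor2 \<times> step) list \<Rightarrow> 'a" where
  "deltaX ii \<phi> X U = sum_list (map (\<lambda>(F, h).
      sharp ii X F (Xh X h) - idphiid ii \<phi> X (pairH \<phi> X (DX2 F) h)) U)"

definition TH :: "('a::times \<Rightarrow> complex) \<Rightarrow> (real \<Rightarrow> 'a) \<Rightarrow>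
    (tensor2 \<times> step) list \<Rightarrow> (tensor2 \<times> step) list \<Rightarrow> tensor3" where
  "TH \<phi> X U V = concat (map (\<lambda>(F, h). concat (map (\<lambda>(G, k).
      t3mult (pairH \<phi> X (D1 F) k) (pairH \<phi> X (Estar3 (D2 G)) h) @
      t3mult (pairH \<phi> X (D2 F) k) (pairH \<phi> X (Estar3 (D1 G)) h)) V)) U)"

end

theory Submission
  imports Defs
begin

fun splits :: "'x list \<Rightarrow> ('x list \<times> 'x \<times> 'x list) list" where
  "splits [] = []"
| "splits (x#xs) = ([],x,xs) # map (\<lambda>(a,y,b). (x#a,y,b)) (splits xs)"

lemma splits_append:
  "splits (a@b) = map (\<lambda>(p,x,q). (p,x,q@b)) (splits a) @ map (\<lambda>(p,x,q). (a@p,x,q)) (splits b)"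
  by (induction a) (auto simp: case_prod_beta comp_def)

lemma splits_map:
  "splits (map f w) = map (\<lambda>(a,x,b). (map f a, f x, map f b)) (splits w)"
  by (induction w) (auto simp: case_prod_beta comp_def)

lemma splits_rev:
  "splits (rev w) = rev (map (\<lambda>(a,x,b). (rev b, x, rev a)) (splits w))"
  by (induction w) (auto simp: splits_append split_def comp_def rev_map)

lemma splits_idx:
  "splits w = map (\<lambda>i. (take i w, w!i, drop (Suc i) w)) [0..<length w]"
proof (induction w)
  case Nil then show ?case by simp
next
  case (Cons x w)
  have "[0..<length (x#w)] = 0 # map Suc [0..<length w]"
    by (simp add: upt_conv_Cons map_Suc_upt del: upt_Suc)
  then show ?case using Cons by (simp add: comp_def)
qed

lemma in_set_splits: "(a,x,b) \<in> set (splits w) \<Longrightarrow> w = a @ x # b"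
  by (induction w arbitrary: a) auto

lemma sum_list_swap:
  "(\<Sum>x\<leftarrow>xs. \<Sum>y\<leftarrow>ys. f x y) = (\<Sum>y\<leftarrow>ys. \<Sum>x\<leftarrow>xs. (f x y :: 'b::comm_monoid_add))"
  by (induction xs) (auto simp: sum_list_addf)

lemma splits_reassoc:
  "(\<Sum>(a,x,b)\<leftarrow>splits r. \<Sum>(b1,y,b2)\<leftarrow>splits b. f a x b1 y b2) =
   (\<Sum>(a,y,b)\<leftarrow>splits r. \<Sum>(a1,x,a2)\<leftarrow>splits a. (f a1 x a2 y b :: 'b::comm_monoid_add))"
proof (induction r arbitrary: f)
  case Nil then show ?case by simp
next
  case (Cons z r)
  have "(\<Sum>(a,x,b)\<leftarrow>splits (z#r). \<Sum>(b1,y,b2)\<leftarrow>splits b. f a x b1 y b2)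
     = (\<Sum>(b1,y,b2)\<leftarrow>splits r. f [] z b1 y b2) + (\<Sum>(a,x,b)\<leftarrow>splits r. \<Sum>(b1,y,b2)\<leftarrow>splits b. f (z#a) x b1 y b2)"
    by (simp add: split_def comp_def)
  also have "\<dots> = (\<Sum>(b1,y,b2)\<leftarrow>splits r. f [] z b1 y b2) + (\<Sum>(a,y,b)\<leftarrow>splits r. \<Sum>(a1,x,a2)\<leftarrow>splits a. f (z#a1) x a2 y b)"
    using Cons[of "\<lambda>a x b1 y b2. f (z#a) x b1 y b2"] by simp
  also have "\<dots> = (\<Sum>(a,y,b)\<leftarrow>splits (z#r). \<Sum>(a1,x,a2)\<leftarrow>splits a. f a1 x a2 y b)"
    by (simp add: split_def comp_def sum_list_addf)
  finally show ?case .
qed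

definition SS :: "'x list \<Rightarrow> ('x list \<Rightarrow> 'x \<Rightarrow> 'x list \<Rightarrow> 'c::comm_monoid_add) \<Rightarrow> 'c" where
  "SS w f = (\<Sum>(a,x,b)\<leftarrow>splits w. f a x b)"

lemma SS_Nil[simp]: "SS [] f = 0" by (simp add: SS_def)

lemma SS_zero[simp]: "SS w (\<lambda>a x b. 0) = 0" by (simp add: SS_def split_def)

lemma SS_Cons: "SS (x#w) f = f [] x w + SS w (\<lambda>a y b. f (x#a) y b)"
  by (simp add: SS_def split_def comp_def)

lemma SS_append: "SS (p@q) f = SS p (\<lambda>a x b. f a x (b@q)) + SS q (\<lambda>a x b. f (p@a) x b)"
  by (simp add: SS_def splits_append split_def comp_def)

lemma SS_add: "SS w (\<lambda>a x b. f a x b + g a x b) = SS w f + SS w g"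
  by (simp add: SS_def split_def sum_list_addf)

lemma SS_diff: "SS w (\<lambda>a x b. (f a x b - g a x b :: 'c::ab_group_add)) = SS w f - SS w g"
  by (simp add: SS_def split_def sum_list_subtractf)

lemma SS_cmult: "(c::'c::comm_ring_1) * SS w f = SS w (\<lambda>a x b. c * f a x b)"
  by (simp add: SS_def split_def sum_list_const_mult)

lemma SS_multc: "SS w f * (c::'c::comm_ring_1) = SS w (\<lambda>a x b. f a x b * c)"
  by (simp add: SS_def split_def sum_list_mult_const)

lemma SS_cong: "(\<And>a x b. w = a @ x # b \<Longrightarrow> f a x b = g a x b) \<Longrightarrow> SS w f = SS w g"
  unfolding SS_def by (rule arg_cong[where f=sum_list], rule map_cong) (auto dest: in_set_splits)

lemma SS_swap: "SS p (\<lambda>a x b. SS q (\<lambda>a' y b'. f a x b a' y b')) = SS q (\<lambda>a' y b'. SS p (\<lambda>a x b. f a x b a' y b'))"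
  unfolding SS_def split_def by (rule sum_list_swap)

lemma SS_reassoc: "SS r (\<lambda>a x b. SS b (\<lambda>b1 y b2. f a x b1 y b2)) = SS r (\<lambda>a y b. SS a (\<lambda>a1 x a2. f a1 x a2 y b))"
  unfolding SS_def using splits_reassoc[of f r] by (simp add: split_def)

lemma SS_rev: "SS (rev w) f = SS w (\<lambda>a x b. f (rev b) x (rev a))"
  by (simp add: SS_def splits_rev split_def comp_def rev_map[symmetric] sum_list_rev)

lemma abstract_identity:
  fixes M :: "'l list \<Rightarrow> 'c::comm_ring_1" and e :: "'l \<Rightarrow> 'l \<Rightarrow> 'c" and P :: "'l set"
  assumes tr: "\<And>a b. M (a@b) = M (b@a)"
  and sd: "\<And>x w. x \<in> P \<Longrightarrow> set w \<subseteq> P \<Longrightarrow> M (x#w) = SS w (\<lambda>a y b. e x y * M a * M b)"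
  and es: "\<And>x y. e x y = e y x"
  and P: "set u \<subseteq> P" "set v \<subseteq> P" "set r \<subseteq> P" "set s \<subseteq> P" "h \<in> P" "k \<in> P"
  and Dual_def: "\<And>w. Dual w = SS w (\<lambda>a x b. e h x * M (v@a) * M (b@u))"
  shows "Dual (r@k#s) - SS r (\<lambda>a x b. e x k * M b * Dual (a@s)) - SS s (\<lambda>a x b. e x k * M a * Dual (r@b))
   = e h k * M (u@s) * M (v@r)
     + SS u (\<lambda>a x b. SS r (\<lambda>a' y b'. e x k * e y h * M (a@s) * M (b@b') * M (v@a')))
     + SS v (\<lambda>a x b. SS s (\<lambda>a' y b'. e x k * e y h * M (u@b') * M (a@a') * M (b@r)))"
proof -
  have D: "Dual (r@k#s) = SS r (\<lambda>a x b. e h x * M (v@a) * M (b@k#s@u)) + e h k * M (v@r) * M (s@u)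
     + SS s (\<lambda>a x b. e h x * M (v@r@k#a) * M (b@u))"
    by (simp add: Dual_def SS_append SS_Cons)
  have T1: "SS r (\<lambda>a x b. e h x * M (v@a) * M (b@k#s@u)) =
      SS r (\<lambda>a x b. SS s (\<lambda>s1 y s2. e h x * M (v@a) * e k y * M s1 * M (s2@u@b)))
    + SS r (\<lambda>a x b. SS u (\<lambda>u1 y u2. e h x * M (v@a) * e k y * M (s@u1) * M (u2@b)))
    + SS r (\<lambda>a x b. SS b (\<lambda>b1 y b2. e h x * M (v@a) * e k y * M (s@u@b1) * M b2))"
  proof -
    have "SS r (\<lambda>a x b. e h x * M (v@a) * M (b@k#s@u)) = SS r (\<lambda>a x b.
       SS s (\<lambda>s1 y s2. e h x * M (v@a) * e k y * M s1 * M (s2@u@b))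
     + SS u (\<lambda>u1 y u2. e h x * M (v@a) * e k y * M (s@u1) * M (u2@b))
     + SS b (\<lambda>b1 y b2. e h x * M (v@a) * e k y * M (s@u@b1) * M b2))"
    proof (rule SS_cong)
      fix a x b assume rr: "r = a @ x # b"
      have "M (b@k#s@u) = M (k#(s@u@b))" using tr[of b "k#s@u"] by simp
      also have "\<dots> = SS (s@u@b) (\<lambda>a y b. e k y * M a * M b)"
        using P rr by (intro sd) auto
      finally show "e h x * M (v@a) * M (b@k#s@u) = 
       SS s (\<lambda>s1 y s2. e h x * M (v@a) * e k y * M s1 * M (s2@u@b))
     + SS u (\<lambda>u1 y u2. e h x * M (v@a) * e k y * M (s@u1) * M (u2@b))
     + SS b (\<lambda>b1 y b2. e h x * M (v@a) * e k y * M (s@u@b1) * M b2)"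
        by (simp add: SS_append SS_cmult distrib_left mult.assoc)
    qed
    then show ?thesis by (simp add: SS_add)
  qed
  have T3: "SS s (\<lambda>a x b. e h x * M (v@r@k#a) * M (b@u)) =
      SS s (\<lambda>a x b. SS a (\<lambda>a1 y a2. e h x * M (b@u) * e k y * M a1 * M (a2@v@r)))
    + SS s (\<lambda>a x b. SS v (\<lambda>v1 y v2. e h x * M (b@u) * e k y * M (a@v1) * M (v2@r)))
    + SS s (\<lambda>a x b. SS r (\<lambda>r1 y r2. e h x * M (b@u) * e k y * M (a@v@r1) * M r2))"
  proof -
    have "SS s (\<lambda>a x b. e h x * M (v@r@k#a) * M (b@u)) = SS s (\<lambda>a x b.
       SS a (\<lambda>a1 y a2. e h x * M (b@u) * e k y * M a1 * M (a2@v@r))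
     + SS v (\<lambda>v1 y v2. e h x * M (b@u) * e k y * M (a@v1) * M (v2@r))
     + SS r (\<lambda>r1 y r2. e h x * M (b@u) * e k y * M (a@v@r1) * M r2))"
    proof (rule SS_cong)
      fix a x b assume ss: "s = a @ x # b"
      have "M (v@r@k#a) = M (k#(a@v@r))" using tr[of "v@r" "k#a"] by simp
      also have "\<dots> = SS (a@v@r) (\<lambda>a y b. e k y * M a * M b)"
        using P ss by (intro sd) auto
      finally show "e h x * M (v@r@k#a) * M (b@u) = 
       SS a (\<lambda>a1 y a2. e h x * M (b@u) * e k y * M a1 * M (a2@v@r))
     + SS v (\<lambda>v1 y v2. e h x * M (b@u) * e k y * M (a@v1) * M (v2@r))
     + SS r (\<lambda>r1 y r2. e h x * M (b@u) * e k y * M (a@v@r1) * M r2)"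
        by (simp add: SS_append SS_cmult SS_multc distrib_left distrib_right mult_ac)
    qed
    then show ?thesis by (simp add: SS_add)
  qed
  have B1: "SS r (\<lambda>a x b. e x k * M b * Dual (a@s)) =
      SS r (\<lambda>a y b. SS a (\<lambda>a1 x a2. e y k * M b * (e h x * M (v@a1) * M (a2@s@u))))
    + SS r (\<lambda>a y b. SS s (\<lambda>s1 x s2. e y k * M b * (e h x * M (v@a@s1) * M (s2@u))))"
    by (simp add: Dual_def SS_append SS_cmult distrib_left SS_add)
  have B2: "SS s (\<lambda>a x b. e x k * M a * Dual (r@b)) =
      SS s (\<lambda>a y b. SS r (\<lambda>r1 x r2. e y k * M a * (e h x * M (v@r1) * M (r2@b@u))))
    + SS s (\<lambda>a y b. SS b (\<lambda>b1 x b2. e y k * M a * (e h x * M (v@r@b1) * M (b2@u))))"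
    by (simp add: Dual_def SS_append SS_cmult distrib_left SS_add)
  have c1: "SS r (\<lambda>a x b. SS b (\<lambda>b1 y b2. e h x * M (v@a) * e k y * M (s@u@b1) * M b2))
      = SS r (\<lambda>a y b. SS a (\<lambda>a1 x a2. e y k * M b * (e h x * M (v@a1) * M (a2@s@u))))"
    apply (subst SS_reassoc)
    using tr[of "s@u"] by (simp add: es[of k] mult_ac)
  have c2: "SS s (\<lambda>a x b. SS r (\<lambda>r1 y r2. e h x * M (b@u) * e k y * M (a@v@r1) * M r2))
      = SS r (\<lambda>a y b. SS s (\<lambda>s1 x s2. e y k * M b * (e h x * M (v@a@s1) * M (s2@u))))"
    apply (subst SS_swap)
    using tr[of _ "v@_"] by (simp add: es[of k] mult_ac)
  have c3: "SS r (\<lambda>a x b. SS s (\<lambda>s1 y s2. e h x * M (v@a) * e k y * M s1 * M (s2@u@b)))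
      = SS s (\<lambda>a y b. SS r (\<lambda>r1 x r2. e y k * M a * (e h x * M (v@r1) * M (r2@b@u))))"
    apply (subst SS_swap)
    using tr[of "_ @ u" _] by (simp add: es[of k] mult_ac)
  have c4: "SS s (\<lambda>a x b. SS a (\<lambda>a1 y a2. e h x * M (b@u) * e k y * M a1 * M (a2@v@r)))
      = SS s (\<lambda>a y b. SS b (\<lambda>b1 x b2. e y k * M a * (e h x * M (v@r@b1) * M (b2@u))))"
    apply (subst SS_reassoc)
    using tr[of _ "v@r"] by (simp add: es[of k] mult_ac)
  have m1: "SS r (\<lambda>a x b. SS u (\<lambda>u1 y u2. e h x * M (v@a) * e k y * M (s@u1) * M (u2@b)))
     = SS u (\<lambda>a x b. SS r (\<lambda>a' y b'. e x k * e y h * M (a@s) * M (b@b') * M (v@a')))"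
    apply (subst SS_swap)
    using tr[of s] by (simp add: es[of k] es[of h] mult_ac)
  have m2: "SS s (\<lambda>a x b. SS v (\<lambda>v1 y v2. e h x * M (b@u) * e k y * M (a@v1) * M (v2@r)))
     = SS v (\<lambda>a x b. SS s (\<lambda>a' y b'. e x k * e y h * M (u@b') * M (a@a') * M (b@r)))"
    apply (subst SS_swap)
    using tr by (simp add: es[of k] es[of h] mult_ac)
  have m0: "M (s@u) = M (u@s)" by (rule tr)
  show ?thesis
    unfolding D T1 T3 B1 B2 c1 c2 c3 c4 m1 m2 m0 by (simp add: algebra_simps)
qed


definition ncbound :: "(nat\<times>nat) set \<Rightarrow> nat \<Rightarrow> bool" where
  "ncbound \<pi> n \<longleftrightarrow> (\<forall>p q. (p,q)\<in>\<pi> \<longrightarrow> p < q \<and> q < n)"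
definition nccover :: "(nat\<times>nat) set \<Rightarrow> nat \<Rightarrow> bool" where
  "nccover \<pi> n \<longleftrightarrow> (\<forall>i<n. \<exists>p q. (p,q)\<in>\<pi> \<and> (p = i \<or> q = i))"
definition ncuniq :: "(nat\<times>nat) set \<Rightarrow> bool" where
  "ncuniq \<pi> \<longleftrightarrow> (\<forall>p q p' q'. (p,q)\<in>\<pi> \<longrightarrow> (p',q')\<in>\<pi> \<longrightarrow> (p = p' \<or> p = q' \<or> q = p' \<or> q = q') \<longrightarrow> p = p' \<and> q = q')"
definition ncnc :: "(nat\<times>nat) set \<Rightarrow> bool" where
  "ncnc \<pi> \<longleftrightarrow> (\<forall>p q p' q'. (p,q)\<in>\<pi> \<longrightarrow> (p',q')\<in>\<pi> \<longrightarrow> \<not> (p < p' \<and> p' < q \<and> q < q'))"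

lemma nc_alt: "\<pi> \<in> nc_pairings n \<longleftrightarrow> ncbound \<pi> n \<and> nccover \<pi> n \<and> ncuniq \<pi> \<and> ncnc \<pi>"
proof
  assume a: "\<pi> \<in> nc_pairings n"
  have A1: "\<forall>pq\<in>\<pi>. fst pq < snd pq \<and> snd pq < n" and
    u: "\<forall>i<n. \<exists>!pq. pq \<in> \<pi> \<and> (fst pq = i \<or> snd pq = i)" and
    A3: "\<forall>pq1\<in>\<pi>. \<forall>pq2\<in>\<pi>. \<not> (fst pq1 < fst pq2 \<and> fst pq2 < snd pq1 \<and> snd pq1 < snd pq2)"
    using a by (simp_all add: nc_pairings_def)
  have b: "ncbound \<pi> n" unfolding ncbound_def
  proof (intro allI impI)
    fix p q assume "(p,q) \<in> \<pi>" then show "p < q \<and> q < n" using A1 by (metis fst_conv snd_conv)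
  qed
  have c: "nccover \<pi> n" unfolding nccover_def
  proof (intro allI impI)
    fix i assume "i < n"
    then obtain pq where "pq \<in> \<pi>" "fst pq = i \<or> snd pq = i" using u by blast
    then show "\<exists>p q. (p,q)\<in>\<pi> \<and> (p = i \<or> q = i)" by (metis prod.collapse)
  qed
  have d: "ncuniq \<pi>"
    unfolding ncuniq_def
  proof (intro allI impI)
    fix p q p' q' assume 1: "(p,q)\<in>\<pi>" and 2: "(p',q')\<in>\<pi>" and 3: "p = p' \<or> p = q' \<or> q = p' \<or> q = q'"
    have lt: "p < n" "q < n" using b 1 unfolding ncbound_def by (meson less_trans)+
    from 3 show "p = p' \<and> q = q'"
    proof (elim disjE)
      assume "p = p'" then show ?thesis using u[rule_format, OF lt(1)] 1 2 by (metis fst_conv prod.inject snd_conv)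
    next
      assume "p = q'" then show ?thesis using u[rule_format, OF lt(1)] 1 2 by (metis fst_conv prod.inject snd_conv)
    next
      assume "q = p'" then show ?thesis using u[rule_format, OF lt(2)] 1 2 by (metis fst_conv prod.inject snd_conv)
    next
      assume "q = q'" then show ?thesis using u[rule_format, OF lt(2)] 1 2 by (metis fst_conv prod.inject snd_conv)
    qed
  qed
  have e: "ncnc \<pi>" unfolding ncnc_def
  proof (intro allI impI)
    fix p q p' q' assume "(p,q)\<in>\<pi>" "(p',q')\<in>\<pi>"
    then show "\<not> (p < p' \<and> p' < q \<and> q < q')" using A3 by (metis fst_conv snd_conv)
  qed
  show "ncbound \<pi> n \<and> nccover \<pi> n \<and> ncuniq \<pi> \<and> ncnc \<pi>" using b c d e by blast
next
  assume a: "ncbound \<pi> n \<and> nccover \<pi> n \<and> ncuniq \<pi> \<and> ncnc \<pi>"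
  show "\<pi> \<in> nc_pairings n"
    unfolding nc_pairings_def
  proof (intro CollectI conjI ballI allI impI)
    fix pq assume "pq \<in> \<pi>" then show "fst pq < snd pq" "snd pq < n" using a unfolding ncbound_def
      by (metis prod.collapse)+
  next
    fix i assume i: "i < n"
    then obtain p q where pq: "(p,q)\<in>\<pi>" "p = i \<or> q = i" using a unfolding nccover_def by blast
    show "\<exists>!pq. pq \<in> \<pi> \<and> (fst pq = i \<or> snd pq = i)"
    proof (rule ex1I[of _ "(p,q)"])
      show "(p,q) \<in> \<pi> \<and> (fst (p,q) = i \<or> snd (p,q) = i)" using pq by auto
    next
      fix y assume "y \<in> \<pi> \<and> (fst y = i \<or> snd y = i)"
      then show "y = (p,q)" using a pq unfolding ncuniq_def by (metis prod.collapse)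
    qed
  next
    fix pq1 pq2 assume "pq1 \<in> \<pi>" "pq2 \<in> \<pi>"
    then show "\<not> (fst pq1 < fst pq2 \<and> fst pq2 < snd pq1 \<and> snd pq1 < snd pq2)"
      using a unfolding ncnc_def by (metis prod.collapse)
  qed
qed

lemma nc_subset: "nc_pairings n \<subseteq> Pow ({..<n} \<times> {..<n})"
  by (auto simp: nc_alt ncbound_def) (meson less_trans)

lemma nc_finite: "finite (nc_pairings n)"
  by (rule finite_subset[OF nc_subset]) auto

lemma nc_elem_finite: "\<pi> \<in> nc_pairings n \<Longrightarrow> finite \<pi>"
  using nc_subset[of n] by (auto intro: finite_subset)

lemma nc_odd: assumes "\<pi> \<in> nc_pairings n" shows "even n"
proof -
  have fin: "finite \<pi>" using assms by (rule nc_elem_finite)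
  have a: "ncbound \<pi> n" "nccover \<pi> n" "ncuniq \<pi>" using assms by (auto simp: nc_alt)
  have U: "{..<n} = (\<Union>pq\<in>\<pi>. {fst pq, snd pq})"
    using a(1,2) unfolding ncbound_def nccover_def by fastforce
  have "card {..<n} = (\<Sum>pq\<in>\<pi>. card {fst pq, snd pq})"
    unfolding U
  proof (rule card_UN_disjoint[OF fin])
    show "\<forall>i\<in>\<pi>. finite {fst i, snd i}" by auto
    show "\<forall>i\<in>\<pi>. \<forall>j\<in>\<pi>. i \<noteq> j \<longrightarrow> {fst i, snd i} \<inter> {fst j, snd j} = {}"
    proof (intro ballI impI)
      fix i j assume ij: "i \<in> \<pi>" "j \<in> \<pi>" "i \<noteq> j"
      obtain a b c d where "i = (a,b)" "j = (c,d)" by (cases i, cases j)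
      with ij a(3) have "\<not>(a=c \<or> a=d \<or> b=c \<or> b=d)" unfolding ncuniq_def by blast
      with \<open>i = (a,b)\<close> \<open>j = (c,d)\<close> show "{fst i, snd i} \<inter> {fst j, snd j} = {}" by auto
    qed
  qed
  also have "\<dots> = (\<Sum>pq\<in>\<pi>. 2)"
  proof (rule sum.cong[OF refl])
    fix x assume "x \<in> \<pi>"
    then have "fst x < snd x" using a(1) unfolding ncbound_def by (metis prod.collapse)
    then show "card {fst x, snd x} = 2" by simp
  qed
  finally show ?thesis by simp
qed

definition NCsum :: "nat \<Rightarrow> (nat\<times>nat \<Rightarrow> 'b::comm_ring_1) \<Rightarrow> 'b" where
  "NCsum n g = (\<Sum>\<pi>\<in>nc_pairings n. \<Prod>pq\<in>\<pi>. g pq)"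

definition sh :: "nat \<Rightarrow> nat\<times>nat \<Rightarrow> nat\<times>nat" where "sh d pq = (fst pq + d, snd pq + d)"

definition Gm :: "nat \<Rightarrow> (nat\<times>nat) set \<times> (nat\<times>nat) set \<Rightarrow> (nat\<times>nat) set" where
  "Gm j pp = insert (0, Suc j) (sh 1 ` fst pp \<union> sh (j+2) ` snd pp)"

definition Rm :: "nat \<Rightarrow> (nat\<times>nat) set \<Rightarrow> (nat\<times>nat) set \<times> (nat\<times>nat) set" where
  "Rm j \<pi> = ({pq. sh 1 pq \<in> \<pi> \<and> snd pq < j}, {pq. sh (j+2) pq \<in> \<pi>})"

lemma memG: "(a,b) \<in> Gm j (\<pi>1,\<pi>2) \<longleftrightarrow> (a = 0 \<and> b = Suc j) \<or> (\<exists>p q. (p,q)\<in>\<pi>1 \<and> a = p+1 \<and> b = q+1)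
   \<or> (\<exists>p q. (p,q)\<in>\<pi>2 \<and> a = p+j+2 \<and> b = q+j+2)"
  unfolding Gm_def sh_def by (auto simp: image_iff) (metis fst_conv snd_conv prod.collapse)+

lemma G_in:
  assumes j: "j < m" and p1: "\<pi>1 \<in> nc_pairings j" and p2: "\<pi>2 \<in> nc_pairings (m-1-j)"
  shows "Gm j (\<pi>1,\<pi>2) \<in> nc_pairings (Suc m)"
proof -
  have a1: "ncbound \<pi>1 j" "nccover \<pi>1 j" "ncuniq \<pi>1" "ncnc \<pi>1" using p1 by (auto simp: nc_alt)
  have a2: "ncbound \<pi>2 (m-1-j)" "nccover \<pi>2 (m-1-j)" "ncuniq \<pi>2" "ncnc \<pi>2" using p2 by (auto simp: nc_alt)
  let ?G = "Gm j (\<pi>1,\<pi>2)"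
  have b: "ncbound ?G (Suc m)" unfolding ncbound_def memG
  proof (intro allI impI)
    fix p q assume "p = 0 \<and> q = Suc j \<or> (\<exists>pa qa. (pa, qa) \<in> \<pi>1 \<and> p = pa + 1 \<and> q = qa + 1) \<or>
         (\<exists>pa qa. (pa, qa) \<in> \<pi>2 \<and> p = pa + j + 2 \<and> q = qa + j + 2)"
    then show "p < q \<and> q < Suc m"
    proof (elim disjE exE conjE)
      fix pa qa assume "(pa, qa) \<in> \<pi>1" "p = pa + 1" "q = qa + 1"
      moreover have "pa < qa \<and> qa < j" using a1(1) calculation(1) unfolding ncbound_def by blast
      ultimately show ?thesis using j by simp
    next
      fix pa qa assume "(pa, qa) \<in> \<pi>2" "p = pa + j + 2" "q = qa + j + 2"
      moreover have "pa < qa \<and> qa < m-1-j" using a2(1) calculation(1) unfolding ncbound_def by blast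
      ultimately show ?thesis using j by linarith
    qed (use j in simp)
  qed
  have c: "nccover ?G (Suc m)" unfolding nccover_def
  proof (intro allI impI)
    fix i assume i: "i < Suc m"
    consider "i = 0" | "i = Suc j" | "1 \<le> i \<and> i \<le> j" | "j+2 \<le> i" by linarith
    then show "\<exists>p q. (p,q)\<in>?G \<and> (p = i \<or> q = i)"
    proof cases
      case 1 then show ?thesis using memG by blast
    next
      case 2 then show ?thesis using memG by blast
    next
      case 3
      then have "i - 1 < j" by linarith
      then obtain p q where pq: "(p,q)\<in>\<pi>1" "p = i - 1 \<or> q = i - 1" using a1(2) unfolding nccover_def by blast
      have "(p+1,q+1) \<in> ?G" unfolding memG using pq(1) by blast
      moreover have "p+1 = i \<or> q+1 = i" using pq(2) 3 by auto
      ultimately show ?thesis by blast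
    next
      case 4
      then have "i - (j+2) < m-1-j" using i by linarith
      then obtain p q where pq: "(p,q)\<in>\<pi>2" "p = i - (j+2) \<or> q = i - (j+2)" using a2(2) unfolding nccover_def by blast
      have "(p+j+2,q+j+2) \<in> ?G" unfolding memG using pq(1) by blast
      moreover have "p+j+2 = i \<or> q+j+2 = i" using pq(2) 4 by auto
      ultimately show ?thesis by blast
    qed
  qed
  have bd1: "\<And>p q. (p,q)\<in>\<pi>1 \<Longrightarrow> p < q \<and> q < j" using a1(1) unfolding ncbound_def by blast
  have bd2: "\<And>p q. (p,q)\<in>\<pi>2 \<Longrightarrow> p < q \<and> q < m-1-j" using a2(1) unfolding ncbound_def by blast
  have uq1: "\<And>p q p' q'. (p,q)\<in>\<pi>1 \<Longrightarrow> (p',q')\<in>\<pi>1 \<Longrightarrow> p = p' \<or> p = q' \<or> q = p' \<or> q = q' \<Longrightarrow> p = p' \<and> q = q'"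
    using a1(3) unfolding ncuniq_def by blast
  have uq2: "\<And>p q p' q'. (p,q)\<in>\<pi>2 \<Longrightarrow> (p',q')\<in>\<pi>2 \<Longrightarrow> p = p' \<or> p = q' \<or> q = p' \<or> q = q' \<Longrightarrow> p = p' \<and> q = q'"
    using a2(3) unfolding ncuniq_def by blast
  have nc1: "\<And>p q p' q'. (p,q)\<in>\<pi>1 \<Longrightarrow> (p',q')\<in>\<pi>1 \<Longrightarrow> \<not> (p < p' \<and> p' < q \<and> q < q')"
    using a1(4) unfolding ncnc_def by blast
  have nc2: "\<And>p q p' q'. (p,q)\<in>\<pi>2 \<Longrightarrow> (p',q')\<in>\<pi>2 \<Longrightarrow> \<not> (p < p' \<and> p' < q \<and> q < q')"
    using a2(4) unfolding ncnc_def by blast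
  have d: "ncuniq ?G" unfolding ncuniq_def memG
    apply (intro allI impI)
    apply (elim disjE exE conjE)
    apply (auto dest: bd1 bd2 uq1 uq2)
    done
  have e: "ncnc ?G" unfolding ncnc_def memG
    apply (intro allI impI)
    apply (elim disjE exE conjE)
    apply (auto dest: bd1 bd2 nc1 nc2)
    done
  show ?thesis using b c d e by (simp add: nc_alt)
qed

lemma K_region:
  assumes p: "\<pi> \<in> nc_pairings (Suc m)" and z: "(0, Suc j) \<in> \<pi>" and ab: "(a,b) \<in> \<pi>"
  shows "(a = 0 \<and> b = Suc j) \<or> (1 \<le> a \<and> a < b \<and> b \<le> j) \<or> (j+2 \<le> a \<and> a < b \<and> b \<le> m)"
proof -
  have A: "ncbound \<pi> (Suc m)" "ncuniq \<pi>" "ncnc \<pi>" using p by (auto simp: nc_alt)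
  have lt: "a < b" "b < Suc m" using A(1) ab unfolding ncbound_def by blast+
  show ?thesis
  proof (cases "a = 0 \<or> a = Suc j \<or> b = Suc j")
    case True
    then have "a = 0 \<and> b = Suc j" using A(2) ab z unfolding ncuniq_def by blast
    then show ?thesis by simp
  next
    case False
    then have ne: "a \<noteq> 0" "a \<noteq> Suc j" "b \<noteq> Suc j" by auto
    show ?thesis
    proof (cases "a \<le> j")
      case True
      have "\<not> (0 < a \<and> a < Suc j \<and> Suc j < b)" using A(3) z ab unfolding ncnc_def by blast
      then have "b \<le> j" using ne True lt by linarith
      then show ?thesis using ne True lt by linarith
    next
      case False
      then show ?thesis using ne lt by linarith
    qed
  qed
qed

lemma R_props:
  assumes j: "j < m" and p: "\<pi> \<in> nc_pairings (Suc m)" and z: "(0, Suc j) \<in> \<pi>"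
  shows "fst (Rm j \<pi>) \<in> nc_pairings j" "snd (Rm j \<pi>) \<in> nc_pairings (m-1-j)" "Gm j (Rm j \<pi>) = \<pi>"
proof -
  have A: "ncbound \<pi> (Suc m)" "nccover \<pi> (Suc m)" "ncuniq \<pi>" "ncnc \<pi>" using p by (auto simp: nc_alt)
  have uq: "\<And>p q p' q'. (p,q)\<in>\<pi> \<Longrightarrow> (p',q')\<in>\<pi> \<Longrightarrow> p = p' \<or> p = q' \<or> q = p' \<or> q = q' \<Longrightarrow> p = p' \<and> q = q'"
    using A(3) unfolding ncuniq_def by blast
  have nc: "\<And>p q p' q'. (p,q)\<in>\<pi> \<Longrightarrow> (p',q')\<in>\<pi> \<Longrightarrow> \<not> (p < p' \<and> p' < q \<and> q < q')"
    using A(4) unfolding ncnc_def by blast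
  have K: "\<And>a b. (a,b)\<in>\<pi> \<Longrightarrow> (a = 0 \<and> b = Suc j) \<or> (1 \<le> a \<and> a < b \<and> b \<le> j) \<or> (j+2 \<le> a \<and> a < b \<and> b \<le> m)"
    using K_region[OF p z] by blast
  have m1: "(p,q) \<in> fst (Rm j \<pi>) \<longleftrightarrow> (p+1,q+1) \<in> \<pi> \<and> q < j" for p q by (simp add: Rm_def sh_def)
  have m2: "(p,q) \<in> snd (Rm j \<pi>) \<longleftrightarrow> (p+j+2,q+j+2) \<in> \<pi>" for p q by (simp add: Rm_def sh_def add.assoc)
  have r1a: "ncbound (fst (Rm j \<pi>)) j" unfolding ncbound_def m1
  proof (intro allI impI)
    fix p q assume "(p+1,q+1)\<in>\<pi> \<and> q < j"
    then show "p < q \<and> q < j" using K by fastforce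
  qed
  have r1b: "nccover (fst (Rm j \<pi>)) j" unfolding nccover_def m1
  proof (intro allI impI)
    fix i assume i: "i < j"
    then have "i+1 < Suc m" using j by linarith
    then obtain a b where ab: "(a,b)\<in>\<pi>" "a = i+1 \<or> b = i+1" using A(2) unfolding nccover_def by blast
    then have "1 \<le> a \<and> a < b \<and> b \<le> j" using K[OF ab(1)] i by auto
    then show "\<exists>p q. ((p+1,q+1)\<in>\<pi> \<and> q < j) \<and> (p = i \<or> q = i)"
      using ab by (intro exI[of _ "a-1"] exI[of _ "b-1"]) auto
  qed
  have r1c: "ncuniq (fst (Rm j \<pi>))" unfolding ncuniq_def m1
  proof (intro allI impI)
    fix p q p' q' assume "(p+1,q+1)\<in>\<pi> \<and> q < j" "(p'+1,q'+1)\<in>\<pi> \<and> q' < j" "p = p' \<or> p = q' \<or> q = p' \<or> q = q'"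
    then show "p = p' \<and> q = q'" using uq[of "p+1" "q+1" "p'+1" "q'+1"] by auto
  qed
  have r1d: "ncnc (fst (Rm j \<pi>))" unfolding ncnc_def m1
  proof (intro allI impI)
    fix p q p' q' assume "(p+1,q+1)\<in>\<pi> \<and> q < j" "(p'+1,q'+1)\<in>\<pi> \<and> q' < j"
    then show "\<not> (p < p' \<and> p' < q \<and> q < q')" using nc[of "p+1" "q+1" "p'+1" "q'+1"] by auto
  qed
  show r1: "fst (Rm j \<pi>) \<in> nc_pairings j" using r1a r1b r1c r1d by (simp add: nc_alt)
  have r2a: "ncbound (snd (Rm j \<pi>)) (m-1-j)" unfolding ncbound_def m2
  proof (intro allI impI)
    fix p q assume "(p+j+2,q+j+2)\<in>\<pi>"
    then show "p < q \<and> q < m-1-j" using K by fastforce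
  qed
  have r2b: "nccover (snd (Rm j \<pi>)) (m-1-j)" unfolding nccover_def m2
  proof (intro allI impI)
    fix i assume i: "i < m-1-j"
    then have "i+j+2 < Suc m" by linarith
    then obtain a b where ab: "(a,b)\<in>\<pi>" "a = i+j+2 \<or> b = i+j+2" using A(2) unfolding nccover_def by blast
    then have ja: "j+2 \<le> a \<and> a < b" using K[OF ab(1)] i by auto
    have e1: "a-(j+2)+j+2 = a" and e2: "b-(j+2)+j+2 = b" using ja by linarith+
    have "(a-(j+2)+j+2, b-(j+2)+j+2) \<in> \<pi>" using ab(1) by (simp only: e1 e2)
    moreover have "a-(j+2) = i \<or> b-(j+2) = i" using ab(2) by auto
    ultimately show "\<exists>p q. (p+j+2,q+j+2)\<in>\<pi> \<and> (p = i \<or> q = i)" by blast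
  qed
  have r2c: "ncuniq (snd (Rm j \<pi>))" unfolding ncuniq_def m2
  proof (intro allI impI)
    fix p q p' q' assume "(p+j+2,q+j+2)\<in>\<pi>" "(p'+j+2,q'+j+2)\<in>\<pi>" "p = p' \<or> p = q' \<or> q = p' \<or> q = q'"
    then show "p = p' \<and> q = q'" using uq[of "p+j+2" "q+j+2" "p'+j+2" "q'+j+2"] by auto
  qed
  have r2d: "ncnc (snd (Rm j \<pi>))" unfolding ncnc_def m2
  proof (intro allI impI)
    fix p q p' q' assume "(p+j+2,q+j+2)\<in>\<pi>" "(p'+j+2,q'+j+2)\<in>\<pi>"
    then show "\<not> (p < p' \<and> p' < q \<and> q < q')" using nc[of "p+j+2" "q+j+2" "p'+j+2" "q'+j+2"] by auto
  qed
  show r2: "snd (Rm j \<pi>) \<in> nc_pairings (m-1-j)" using r2a r2b r2c r2d by (simp add: nc_alt)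
  show "Gm j (Rm j \<pi>) = \<pi>"
  proof (intro set_eqI iffI)
    fix x assume "x \<in> Gm j (Rm j \<pi>)"
    then obtain a b where x: "x = (a,b)" "(a,b) \<in> Gm j (fst (Rm j \<pi>), snd (Rm j \<pi>))" by (cases x) auto
    then show "x \<in> \<pi>" unfolding memG m1 m2 using z by auto
  next
    fix x assume x: "x \<in> \<pi>"
    obtain a b where ab: "x = (a,b)" by (cases x)
    have "(a,b) \<in> Gm j (fst (Rm j \<pi>), snd (Rm j \<pi>))" unfolding memG m1 m2
    proof -
      from K[of a b] x ab consider "a = 0 \<and> b = Suc j" | "1 \<le> a \<and> a < b \<and> b \<le> j" | "j+2 \<le> a \<and> a < b \<and> b \<le> m" by blast
      then show "(a = 0 \<and> b = Suc j) \<or> (\<exists>p q. ((p+1,q+1)\<in>\<pi> \<and> q < j) \<and> a = p+1 \<and> b = q+1) \<or>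
                 (\<exists>p q. (p+j+2,q+j+2)\<in>\<pi> \<and> a = p+j+2 \<and> b = q+j+2)"
      proof cases
        case 1 then show ?thesis by blast
      next
        case 2 then show ?thesis using x ab by (intro disjI2 disjI1 exI[of _ "a-1"] exI[of _ "b-1"]) auto
      next
        case 3
        have e1: "a-(j+2)+j+2 = a" and e2: "b-(j+2)+j+2 = b" using 3 by linarith+
        show ?thesis
          apply (rule disjI2, rule disjI2, rule exI[of _ "a-(j+2)"], rule exI[of _ "b-(j+2)"])
          apply (simp only: e1 e2)
          using x ab by simp
      qed
    qed
    then show "x \<in> Gm j (Rm j \<pi>)" using ab by simp
  qed
qed

lemma RG:
  assumes j: "j < m" and p1: "\<pi>1 \<in> nc_pairings j" and p2: "\<pi>2 \<in> nc_pairings (m-1-j)"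
  shows "Rm j (Gm j (\<pi>1,\<pi>2)) = (\<pi>1,\<pi>2)"
proof -
  have bd1: "\<And>p q. (p,q)\<in>\<pi>1 \<Longrightarrow> p < q \<and> q < j" using p1 unfolding nc_alt ncbound_def by blast
  have bd2: "\<And>p q. (p,q)\<in>\<pi>2 \<Longrightarrow> p < q \<and> q < m-1-j" using p2 unfolding nc_alt ncbound_def by blast
  have "fst (Rm j (Gm j (\<pi>1,\<pi>2))) = \<pi>1"
  proof (intro set_eqI iffI)
    fix x assume "x \<in> fst (Rm j (Gm j (\<pi>1,\<pi>2)))"
    then obtain p q where x: "x = (p,q)" "(p+1,q+1) \<in> Gm j (\<pi>1,\<pi>2)" "q < j"
      by (cases x) (auto simp: Rm_def sh_def)
    then show "x \<in> \<pi>1" unfolding memG by auto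
  next
    fix x assume "x \<in> \<pi>1"
    then obtain p q where x: "x = (p,q)" "(p,q) \<in> \<pi>1" by (cases x) auto
    then have "(p+1,q+1) \<in> Gm j (\<pi>1,\<pi>2)" "q < j" unfolding memG using bd1 by auto
    then show "x \<in> fst (Rm j (Gm j (\<pi>1,\<pi>2)))" using x by (auto simp: Rm_def sh_def)
  qed
  moreover have "snd (Rm j (Gm j (\<pi>1,\<pi>2))) = \<pi>2"
  proof (intro set_eqI iffI)
    fix x assume "x \<in> snd (Rm j (Gm j (\<pi>1,\<pi>2)))"
    then obtain p q where x: "x = (p,q)" "(p+j+2,q+j+2) \<in> Gm j (\<pi>1,\<pi>2)"
      by (cases x) (auto simp: Rm_def sh_def add.assoc)
    from x(2) show "x \<in> \<pi>2" unfolding memG using x(1) by (force dest: bd1)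
  next
    fix x assume "x \<in> \<pi>2"
    then obtain p q where x: "x = (p,q)" "(p,q) \<in> \<pi>2" by (cases x) auto
    then have "(p+j+2,q+j+2) \<in> Gm j (\<pi>1,\<pi>2)" unfolding memG by auto
    then show "x \<in> snd (Rm j (Gm j (\<pi>1,\<pi>2)))" using x by (auto simp: Rm_def sh_def add.assoc)
  qed
  ultimately show ?thesis by (metis prod.collapse)
qed

lemma prod_Gm:
  assumes p1: "\<pi>1 \<in> nc_pairings j" and p2: "\<pi>2 \<in> nc_pairings k"
  shows "(\<Prod>pq\<in>Gm j (\<pi>1,\<pi>2). g pq) = g (0, Suc j) * (\<Prod>pq\<in>\<pi>1. g (sh 1 pq)) * (\<Prod>pq\<in>\<pi>2. g (sh (j+2) pq))"
proof -
  have f1: "finite \<pi>1" "finite \<pi>2" using p1 p2 by (auto intro: nc_elem_finite)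
  have bd1: "\<And>p q. (p,q)\<in>\<pi>1 \<Longrightarrow> p < q \<and> q < j" using p1 unfolding nc_alt ncbound_def by blast
  have inj: "inj_on (sh d) A" for d A by (auto simp: inj_on_def sh_def prod_eq_iff)
  have n1: "(0, Suc j) \<notin> sh 1 ` \<pi>1 \<union> sh (j+2) ` \<pi>2" by (auto simp: sh_def)
  have dj: "sh 1 ` \<pi>1 \<inter> sh (j+2) ` \<pi>2 = {}"
  proof (rule ccontr)
    assume "sh 1 ` \<pi>1 \<inter> sh (j+2) ` \<pi>2 \<noteq> {}"
    then obtain x y where "x \<in> \<pi>1" "y \<in> \<pi>2" "sh 1 x = sh (j+2) y" by blast
    moreover obtain p q where "x = (p,q)" by (cases x)
    ultimately show False using bd1[of p q] by (auto simp: sh_def)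
  qed
  have "(\<Prod>pq\<in>Gm j (\<pi>1,\<pi>2). g pq) = g (0, Suc j) * ((\<Prod>pq\<in>sh 1 ` \<pi>1. g pq) * (\<Prod>pq\<in>sh (j+2) ` \<pi>2. g pq))"
    unfolding Gm_def fst_conv snd_conv
    using f1 n1 dj by (simp add: prod.union_disjoint)
  also have "\<dots> = g (0, Suc j) * (\<Prod>pq\<in>\<pi>1. g (sh 1 pq)) * (\<Prod>pq\<in>\<pi>2. g (sh (j+2) pq))"
    by (simp add: prod.reindex[OF inj] mult.assoc)
  finally show ?thesis .
qed

lemma nc_decomp:
  "NCsum (Suc m) g = (\<Sum>j<m. g (0, Suc j) * NCsum j (\<lambda>pq. g (sh 1 pq)) * NCsum (m-1-j) (\<lambda>pq. g (sh (j+2) pq)))"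
proof -
  define N where "N = nc_pairings (Suc m)"
  define Nj where "Nj j = {\<pi>\<in>N. (0, Suc j) \<in> \<pi>}" for j
  have NU: "N = (\<Union>j\<in>{..<m}. Nj j)"
  proof (intro set_eqI iffI)
    fix \<pi> assume p: "\<pi> \<in> N"
    then have A: "ncbound \<pi> (Suc m)" "nccover \<pi> (Suc m)" by (auto simp: N_def nc_alt)
    then obtain p q where pq: "(p,q)\<in>\<pi>" "p = 0 \<or> q = 0" unfolding nccover_def by blast
    have "p < q" "q < Suc m" using A(1) pq(1) unfolding ncbound_def by blast+
    with pq have "p = 0" "q = Suc (q - 1)" "q - 1 < m" by auto
    with pq p show "\<pi> \<in> (\<Union>j\<in>{..<m}. Nj j)" unfolding Nj_def by (metis (mono_tags, lifting) UN_iff lessThan_iff mem_Collect_eq)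
  next
    fix \<pi> assume "\<pi> \<in> (\<Union>j\<in>{..<m}. Nj j)" then show "\<pi> \<in> N" by (auto simp: Nj_def)
  qed
  have fin: "finite N" unfolding N_def by (rule nc_finite)
  have disj: "\<forall>i\<in>{..<m}. \<forall>j\<in>{..<m}. i \<noteq> j \<longrightarrow> Nj i \<inter> Nj j = {}"
  proof (intro ballI impI)
    fix i j :: nat assume "i \<in> {..<m}" "j \<in> {..<m}" "i \<noteq> j"
    show "Nj i \<inter> Nj j = {}"
    proof (rule ccontr)
      assume "Nj i \<inter> Nj j \<noteq> {}"
      then obtain \<pi> where "\<pi> \<in> N" "(0, Suc i) \<in> \<pi>" "(0, Suc j) \<in> \<pi>" by (auto simp: Nj_def)
      then have "ncuniq \<pi>" "(0, Suc i) \<in> \<pi>" "(0, Suc j) \<in> \<pi>" by (auto simp: N_def nc_alt)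
      then have "Suc i = Suc j" unfolding ncuniq_def by blast
      with \<open>i \<noteq> j\<close> show False by simp
    qed
  qed
  have "NCsum (Suc m) g = (\<Sum>j<m. \<Sum>\<pi>\<in>Nj j. \<Prod>pq\<in>\<pi>. g pq)"
    unfolding NCsum_def N_def[symmetric] NU
    by (rule sum.UNION_disjoint) (use fin NU disj in \<open>auto intro: finite_subset\<close>)
  also have "\<dots> = (\<Sum>j<m. g (0, Suc j) * NCsum j (\<lambda>pq. g (sh 1 pq)) * NCsum (m-1-j) (\<lambda>pq. g (sh (j+2) pq)))"
  proof (rule sum.cong[OF refl])
    fix j assume "j \<in> {..<m}"
    then have j: "j < m" by simp
    define S where "S = nc_pairings j \<times> nc_pairings (m-1-j)"
    have "(\<Sum>\<pi>\<in>Nj j. \<Prod>pq\<in>\<pi>. g pq) = (\<Sum>pp\<in>S. \<Prod>pq\<in>Gm j pp. g pq)"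
    proof (rule sum.reindex_bij_witness[of S "Rm j" "Gm j", symmetric])
      fix pp assume "pp \<in> S"
      then obtain p1 p2 where pp: "pp = (p1,p2)" "p1 \<in> nc_pairings j" "p2 \<in> nc_pairings (m-1-j)" by (auto simp: S_def)
      show "Rm j (Gm j pp) = pp" using RG[OF j pp(2,3)] pp(1) by simp
      show "Gm j pp \<in> Nj j" using G_in[OF j pp(2,3)] pp(1) by (simp add: Nj_def N_def Gm_def)
    next
      fix \<pi> assume "\<pi> \<in> Nj j"
      then have p: "\<pi> \<in> nc_pairings (Suc m)" "(0, Suc j) \<in> \<pi>" by (auto simp: Nj_def N_def)
      show "Gm j (Rm j \<pi>) = \<pi>" using R_props(3)[OF j p] .
      show "Rm j \<pi> \<in> S" using R_props(1,2)[OF j p] unfolding S_def by (metis mem_Times_iff)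
    qed simp
    also have "\<dots> = (\<Sum>pp\<in>S. g (0, Suc j) * (\<Prod>pq\<in>fst pp. g (sh 1 pq)) * (\<Prod>pq\<in>snd pp. g (sh (j+2) pq)))"
    proof (rule sum.cong[OF refl])
      fix pp assume "pp \<in> S"
      then obtain p1 p2 where pp: "pp = (p1,p2)" "p1 \<in> nc_pairings j" "p2 \<in> nc_pairings (m-1-j)" by (auto simp: S_def)
      show "(\<Prod>pq\<in>Gm j pp. g pq) = g (0, Suc j) * (\<Prod>pq\<in>fst pp. g (sh 1 pq)) * (\<Prod>pq\<in>snd pp. g (sh (j+2) pq))"
        using prod_Gm[OF pp(2,3), of g] pp(1) by simp
    qed
    also have "\<dots> = g (0, Suc j) * NCsum j (\<lambda>pq. g (sh 1 pq)) * NCsum (m-1-j) (\<lambda>pq. g (sh (j+2) pq))"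
    proof -
      have "g (0, Suc j) * NCsum j (\<lambda>pq. g (sh 1 pq)) * NCsum (m-1-j) (\<lambda>pq. g (sh (j+2) pq))
        = (\<Sum>p1\<in>nc_pairings j. \<Sum>p2\<in>nc_pairings (m-1-j). g (0, Suc j) * (\<Prod>pq\<in>p1. g (sh 1 pq)) * (\<Prod>pq\<in>p2. g (sh (j+2) pq)))"
        unfolding NCsum_def sum_distrib_left sum_distrib_right by (simp add: mult.assoc sum.swap[of _ "nc_pairings (m - Suc j)"])
      also have "\<dots> = (\<Sum>pp\<in>S. g (0, Suc j) * (\<Prod>pq\<in>fst pp. g (sh 1 pq)) * (\<Prod>pq\<in>snd pp. g (sh (j+2) pq)))"
        unfolding S_def sum.cartesian_product by (simp add: case_prod_beta)
      finally show ?thesis by simp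
    qed
    finally show "(\<Sum>\<pi>\<in>Nj j. \<Prod>pq\<in>\<pi>. g pq) = g (0, Suc j) * NCsum j (\<lambda>pq. g (sh 1 pq)) * NCsum (m-1-j) (\<lambda>pq. g (sh (j+2) pq))" .
  qed
  finally show ?thesis .
qed

lemma NCsum_odd: "odd n \<Longrightarrow> NCsum n g = 0"
  using nc_odd unfolding NCsum_def by (metis empty_iff equals0I sum.empty)


lemma SS_map: "SS (map f w) g = SS w (\<lambda>a x b. g (map f a) (f x) (map f b))"
  by (simp add: SS_def splits_map split_def comp_def)

lemma SS_idx: "SS w f = (\<Sum>i<length w. f (take i w) (w!i) (drop (Suc i) w))"
  by (simp add: SS_def splits_idx comp_def atLeast0LessThan[symmetric] sum_set_upt_conv_sum_list_nat[symmetric])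

lemma NCsum_cong: "(\<And>\<pi> pq. \<pi> \<in> nc_pairings n \<Longrightarrow> pq \<in> \<pi> \<Longrightarrow> g pq = g' pq) \<Longrightarrow> NCsum n g = NCsum n g'"
  unfolding NCsum_def by (intro sum.cong refl prod.cong) auto

locale ncs =
  fixes ii :: "'a::{real_normed_algebra_1,banach}" and st :: "'a \<Rightarrow> 'a" and \<phi> :: "'a \<Rightarrow> complex"
    and X :: "real \<Rightarrow> 'a" and T :: real
  assumes ncp: "nc_prob_space ii st \<phi>" and scp: "semicircular_process T st \<phi> X"
begin

lemmas ncpc0 = ncp[unfolded nc_prob_space_def]
lemmas c_ii_comm = ncpc0[THEN conjunct1]
lemmas r_0 = ncpc0[THEN conjunct2]
lemmas c_ii_sq = r_0[THEN conjunct1]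
lemmas r_1 = r_0[THEN conjunct2]
lemmas c_norm_scaleC = r_1[THEN conjunct1]
lemmas r_2 = r_1[THEN conjunct2]
lemmas c_st_add = r_2[THEN conjunct1]
lemmas r_3 = r_2[THEN conjunct2]
lemmas c_st_scaleC = r_3[THEN conjunct1]
lemmas r_4 = r_3[THEN conjunct2]
lemmas c_st_mult = r_4[THEN conjunct1]
lemmas r_5 = r_4[THEN conjunct2]
lemmas c_st_st = r_5[THEN conjunct1]
lemmas r_6 = r_5[THEN conjunct2]
lemmas c_norm_st = r_6[THEN conjunct1]
lemmas r_7 = r_6[THEN conjunct2]
lemmas c_phi_add = r_7[THEN conjunct1]
lemmas r_8 = r_7[THEN conjunct2]
lemmas c_phi_scaleC = r_8[THEN conjunct1]
lemmas r_9 = r_8[THEN conjunct2]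
lemmas c_phi_one = r_9[THEN conjunct1]
lemmas r_10 = r_9[THEN conjunct2]
lemmas c_phi_comm = r_10[THEN conjunct1]
lemmas r_11 = r_10[THEN conjunct2]
lemmas c_phi_pos0 = r_11[THEN conjunct1]
lemmas r_12 = r_11[THEN conjunct2]
lemmas c_phi_faith = r_12
lemma ii_comm: "ii * x = x * ii" using c_ii_comm by simp
lemma ii_sq: "ii * ii = -1" using c_ii_sq by simp
lemma st_add: "st (x + y) = st x + st y" using c_st_add by simp
lemma st_scaleC: "st (scaleC ii c x) = scaleC ii (cnj c) (st x)" using c_st_scaleC by simp
lemma st_mult: "st (x * y) = st y * st x" using c_st_mult by simp
lemma st_st: "st (st x) = x" using c_st_st by simp
lemma phi_add: "\<phi> (x + y) = \<phi> x + \<phi> y" using c_phi_add by simp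
lemma phi_scaleC: "\<phi> (scaleC ii c x) = c * \<phi> x" using c_phi_scaleC by simp
lemma phi_one: "\<phi> 1 = 1" using c_phi_one by simp
lemma phi_comm: "\<phi> (x * y) = \<phi> (y * x)" using c_phi_comm by simp
lemma phi_pos: "\<phi> (st x * x) \<in> \<real>" using c_phi_pos0 by simp

lemma X_sa: "t \<in> {0..T} \<Longrightarrow> st (X t) = X t" by (rule bspec[OF conjunct1[OF scp[unfolded semicircular_process_def]]])
lemma wick: "set ts \<subseteq> {0..T} \<Longrightarrow> \<phi> (prod_list (map X ts)) =
  (if even (length ts) then (\<Sum>\<pi>\<in>nc_pairings (length ts). \<Prod>pq\<in>\<pi>. \<phi> (X (ts ! fst pq) * X (ts ! snd pq))) else 0)"
  by (rule mp[OF spec[OF conjunct2[OF scp[unfolded semicircular_process_def]], of ts]])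

lemma scaleC_real: "scaleC ii (complex_of_real r) x = r *\<^sub>R x" by (simp add: scaleC_def)
lemma phi_scaleR: "\<phi> (r *\<^sub>R x) = complex_of_real r * \<phi> x" using phi_scaleC[of "complex_of_real r" x] by (simp add: scaleC_real)
lemma phi_zero[simp]: "\<phi> 0 = 0" using phi_add[of 0 0] by simp
lemma phi_minus: "\<phi> (- x) = - \<phi> x" using phi_scaleR[of "-1" x] by simp
lemma phi_diff: "\<phi> (x - y) = \<phi> x - \<phi> y" using phi_add[of x "-y"] phi_minus[of y] by simp
lemma phi_sum_list: "\<phi> (sum_list (map f xs)) = sum_list (map (\<lambda>x. \<phi> (f x)) xs)" by (induction xs) (simp_all add: phi_add)
lemma st_zero[simp]: "st 0 = 0" using st_add[of 0 0] by simp
lemma st_scaleR: "st (r *\<^sub>R x) = r *\<^sub>R st x" using st_scaleC[of "complex_of_real r" x] by (simp add: scaleC_real)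
lemma st_minus: "st (- x) = - st x" using st_scaleR[of "-1" x] by simp
lemma st_diff: "st (x - y) = st x - st y" using st_add[of x "-y"] st_minus[of y] by simp
lemma st_sum_list: "st (sum_list (map f xs)) = sum_list (map (\<lambda>x. st (f x)) xs)" by (induction xs) (simp_all add: st_add)
lemma st_one: "st 1 = 1"
  using st_mult[of "st 1" 1] by (simp add: st_st)
lemma st_prod_list: "st (prod_list xs) = prod_list (rev (map st xs))" by (induction xs) (simp_all add: st_one st_mult)

lemma scaleC_add_right: "scaleC ii c (x + y) = scaleC ii c x + scaleC ii c y" by (simp add: scaleC_def algebra_simps scaleR_add_right)
lemma scaleC_add_left: "scaleC ii (c + d) x = scaleC ii c x + scaleC ii d x" by (simp add: scaleC_def algebra_simps scaleR_add_left)
lemma scaleC_diff_right: "scaleC ii c (x - y) = scaleC ii c x - scaleC ii c y" by (simp add: scaleC_def algebra_simps)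
lemma scaleC_zero[simp]: "scaleC ii c 0 = 0" by (simp add: scaleC_def)
lemma scaleC_one[simp]: "scaleC ii 1 x = x" by (simp add: scaleC_def)
lemma scaleC_mult_left: "scaleC ii c x * y = scaleC ii c (x * y)" by (simp add: scaleC_def algebra_simps)
lemma scaleC_mult_right: "x * scaleC ii c y = scaleC ii c (x * y)"
proof -
  have "x * (ii * y) = ii * (x * y)" by (metis ii_comm mult.assoc)
  then show ?thesis by (simp add: scaleC_def distrib_left)
qed
lemma scaleC_scaleC: "scaleC ii c (scaleC ii d x) = scaleC ii (c * d) x"
proof -
  have "ii * (ii * x) = - x" by (metis ii_sq mult.assoc mult_minus1)
  then show ?thesis by (simp add: scaleC_def algebra_simps)
qed
lemma scaleC_sum_list: "scaleC ii c (sum_list (map f xs)) = sum_list (map (\<lambda>x. scaleC ii c (f x)) xs)"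
  by (induction xs) (simp_all add: scaleC_add_right)
lemma scaleC_ii: "scaleC ii \<i> x = ii * x" by (simp add: scaleC_def)

lemma st_ii: "st ii = - ii"
proof -
  have "st ii = st (scaleC ii \<i> 1)" by (simp add: scaleC_ii)
  also have "\<dots> = scaleC ii (- \<i>) 1" by (simp add: st_scaleC st_one)
  finally show ?thesis by (simp add: scaleC_def)
qed

lemma phi_st: "\<phi> (st x) = cnj (\<phi> x)"
proof -
  have r: "\<phi> y + \<phi> (st y) \<in> \<real>" for y
  proof -
    have "st (1 + y) * (1 + y) = 1 + y + st y + st y * y" by (simp add: st_add st_one algebra_simps)
    then have "\<phi> (st (1 + y) * (1 + y)) = 1 + (\<phi> y + \<phi> (st y)) + \<phi> (st y * y)" by (simp add: phi_add phi_one)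
    moreover have "\<phi> (st (1 + y) * (1 + y)) \<in> \<real>" "\<phi> (st y * y) \<in> \<real>" by (rule phi_pos)+
    ultimately have "\<phi> (st (1 + y) * (1 + y)) - 1 - \<phi> (st y * y) \<in> \<real>" by (intro Reals_diff Reals_1)
    then show ?thesis using \<open>\<phi> (st (1 + y) * (1 + y)) = _\<close> by simp
  qed
  have "\<phi> (ii * x) = \<i> * \<phi> x" using phi_scaleC[of \<i> x] by (simp add: scaleC_ii)
  moreover have "st (ii * x) = - (ii * st x)" by (simp add: st_mult st_ii ii_comm)
  moreover have "\<phi> (- (ii * st x)) = - \<i> * \<phi> (st x)" using phi_scaleC[of \<i> "st x"] by (simp add: scaleC_ii phi_minus)
  ultimately have i2: "\<i> * \<phi> x - \<i> * \<phi> (st x) \<in> \<real>" using r[of "ii * x"] by simp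
  have i1: "\<phi> x + \<phi> (st x) \<in> \<real>" by (rule r)
  from i1 i2 show ?thesis
    by (simp add: complex_is_Real_iff complex_eq_iff)
qed

end

context ncs begin

lemma SD_points:
  assumes t: "t \<in> {0..T}" and ts: "set ts \<subseteq> {0..T}"
  shows "\<phi> (X t * prod_list (map X ts)) = SS (map X ts) (\<lambda>a y b. \<phi> (X t * y) * \<phi> (prod_list a) * \<phi> (prod_list b))"
proof -
  define gl where "gl l pq = \<phi> (X (l ! fst pq) * X (l ! snd pq))" for l :: "real list" and pq :: "nat \<times> nat"
  have W: "\<phi> (prod_list (map X l)) = NCsum (length l) (gl l)" if "set l \<subseteq> {0..T}" for l
    using wick[OF that] NCsum_odd[of "length l" "gl l"] by (simp add: NCsum_def gl_def)
  define m where "m = length ts"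
  have "\<phi> (X t * prod_list (map X ts)) = \<phi> (prod_list (map X (t#ts)))" by simp
  also have "\<dots> = NCsum (Suc m) (gl (t#ts))" using W[of "t#ts"] t ts by (simp add: m_def)
  also have "\<dots> = (\<Sum>j<m. gl (t#ts) (0, Suc j) * NCsum j (\<lambda>pq. gl (t#ts) (sh 1 pq)) * NCsum (m-1-j) (\<lambda>pq. gl (t#ts) (sh (j+2) pq)))"
    by (rule nc_decomp)
  also have "\<dots> = (\<Sum>j<m. \<phi> (X t * X (ts!j)) * \<phi> (prod_list (map X (take j ts))) * \<phi> (prod_list (map X (drop (Suc j) ts))))"
  proof (rule sum.cong[OF refl])
    fix j assume "j \<in> {..<m}"
    then have j: "j < m" by simp
    have 1: "gl (t#ts) (0, Suc j) = \<phi> (X t * X (ts!j))" by (simp add: gl_def)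
    have "NCsum j (\<lambda>pq. gl (t#ts) (sh 1 pq)) = NCsum j (gl (take j ts))"
    proof (rule NCsum_cong)
      fix \<pi> pq assume "\<pi> \<in> nc_pairings j" "pq \<in> \<pi>"
      moreover obtain p q where pq: "pq = (p,q)" by (cases pq)
      ultimately have "ncbound \<pi> (j)" "(p,q) \<in> \<pi>" by (simp_all add: nc_alt)
      then have "p < q" "q < j" unfolding ncbound_def by blast+
      then show "gl (t#ts) (sh 1 pq) = gl (take j ts) pq" unfolding pq gl_def sh_def fst_conv snd_conv
        by simp
    qed
    also have "\<dots> = \<phi> (prod_list (map X (take j ts)))"
    proof -
      have "set (take j ts) \<subseteq> {0..T}" by (rule order_trans[OF set_take_subset ts])
      then show ?thesis using W[of "take j ts"] j by (simp add: m_def min_def)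
    qed
    finally have 2: "NCsum j (\<lambda>pq. gl (t#ts) (sh 1 pq)) = \<phi> (prod_list (map X (take j ts)))" .
    have "NCsum (m-1-j) (\<lambda>pq. gl (t#ts) (sh (j+2) pq)) = NCsum (m-1-j) (gl (drop (Suc j) ts))"
    proof (rule NCsum_cong)
      fix \<pi> pq assume "\<pi> \<in> nc_pairings (m-1-j)" "pq \<in> \<pi>"
      moreover obtain p q where pq: "pq = (p,q)" by (cases pq)
      ultimately have "ncbound \<pi> (m-1-j)" "(p,q) \<in> \<pi>" by (simp_all add: nc_alt)
      then have "p < q" "q < m-1-j" unfolding ncbound_def by blast+
      then show "gl (t#ts) (sh (j+2) pq) = gl (drop (Suc j) ts) pq" unfolding pq gl_def sh_def fst_conv snd_conv
        using j by (simp add: m_def add.commute)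
    qed
    also have "\<dots> = \<phi> (prod_list (map X (drop (Suc j) ts)))"
    proof -
      have "set (drop (Suc j) ts) \<subseteq> {0..T}" by (rule order_trans[OF set_drop_subset ts])
      then show ?thesis using W[of "drop (Suc j) ts"] j by (simp add: m_def)
    qed
    finally have 3: "NCsum (m-1-j) (\<lambda>pq. gl (t#ts) (sh (j+2) pq)) = \<phi> (prod_list (map X (drop (Suc j) ts)))" .
    show "gl (t#ts) (0, Suc j) * NCsum j (\<lambda>pq. gl (t#ts) (sh 1 pq)) * NCsum (m-1-j) (\<lambda>pq. gl (t#ts) (sh (j+2) pq)) =
          \<phi> (X t * X (ts!j)) * \<phi> (prod_list (map X (take j ts))) * \<phi> (prod_list (map X (drop (Suc j) ts)))"
      using 1 2 3 by simp
  qed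
  also have "\<dots> = SS (map X ts) (\<lambda>a y b. \<phi> (X t * y) * \<phi> (prod_list a) * \<phi> (prod_list b))"
    by (simp add: SS_idx m_def take_map drop_map)
  finally show ?thesis .
qed


definition LL :: "'a set" where "LL = span (X ` {0..T})"

definition SDeq :: "'a \<Rightarrow> 'a list \<Rightarrow> bool" where
  "SDeq y zs \<longleftrightarrow> \<phi> (y * prod_list zs) = SS zs (\<lambda>a x b. \<phi> (y * x) * \<phi> (prod_list a) * \<phi> (prod_list b))"

lemma RHS_split:
  "SS (p @ z # s) (\<lambda>a x b. \<phi> (y * x) * \<phi> (prod_list a) * \<phi> (prod_list b)) =
     SS p (\<lambda>a x b. \<phi> (y * x) * \<phi> (prod_list a) * \<phi> (prod_list b * (z * prod_list s)))
   + \<phi> (y * z) * \<phi> (prod_list p) * \<phi> (prod_list s)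
   + SS s (\<lambda>a x b. \<phi> (y * x) * \<phi> (prod_list p * (z * prod_list a)) * \<phi> (prod_list b))"
  by (simp add: SS_append SS_Cons add.assoc)

lemma phi_lin: "\<phi> (A * ((c *\<^sub>R x + z) * B)) = complex_of_real c * \<phi> (A * (x * B)) + \<phi> (A * (z * B))"
  by (simp add: distrib_left distrib_right phi_add phi_scaleR)

lemma phi_lin2: "\<phi> (y * (c *\<^sub>R x + z)) = complex_of_real c * \<phi> (y * x) + \<phi> (y * z)"
  by (simp add: distrib_left phi_add phi_scaleR)

lemma phi_lin3: "\<phi> ((c *\<^sub>R x + z) * y) = complex_of_real c * \<phi> (x * y) + \<phi> (z * y)"
  by (simp add: distrib_right phi_add phi_scaleR)

lemma SS_lin: "SS w (\<lambda>a x b. (c::complex) * f a x b + g a x b) = c * SS w f + SS w g"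
  by (simp add: SS_add SS_cmult)

lemma SDeq_lin_mid:
  assumes "SDeq y (p @ x # s)" "SDeq y (p @ z # s)"
  shows "SDeq y (p @ (c *\<^sub>R x + z) # s)"
proof -
  let ?c = "complex_of_real c"
  have L: "\<phi> (y * prod_list (p @ (c *\<^sub>R x + z) # s)) = ?c * \<phi> (y * prod_list (p @ x # s)) + \<phi> (y * prod_list (p @ z # s))"
    using phi_lin[of "y * prod_list p" c x z "prod_list s"] by (simp add: mult.assoc)
  have R: "SS (p @ (c *\<^sub>R x + z) # s) (\<lambda>a x b. \<phi> (y * x) * \<phi> (prod_list a) * \<phi> (prod_list b)) =
      ?c * SS (p @ x # s) (\<lambda>a x b. \<phi> (y * x) * \<phi> (prod_list a) * \<phi> (prod_list b))
    + SS (p @ z # s) (\<lambda>a x b. \<phi> (y * x) * \<phi> (prod_list a) * \<phi> (prod_list b))"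
    unfolding RHS_split phi_lin phi_lin2
    by (simp add: SS_add SS_cmult algebra_simps)
  show ?thesis using assms L R unfolding SDeq_def by simp
qed

lemma SDeq_zero_mid: "SDeq y (p @ 0 # s)"
  unfolding SDeq_def RHS_split by simp

lemma SDeq_lin_y:
  assumes "SDeq x zs" "SDeq z zs"
  shows "SDeq (c *\<^sub>R x + z) zs"
  using assms unfolding SDeq_def phi_lin2 phi_lin3
  by (simp add: SS_add SS_cmult algebra_simps)

lemma SD_span:
  assumes y: "y \<in> LL" and zs: "zs \<in> lists LL"
  shows "SDeq y zs"
proof -
  have step2: "s \<in> lists LL \<Longrightarrow> p \<in> lists (X ` {0..T}) \<Longrightarrow> SDeq (X t) (p @ s)" if t: "t \<in> {0..T}" for t p s
  proof (induction s arbitrary: p)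
    case Nil
    then obtain ts where ts: "p = map X ts" "ts \<in> lists {0..T}" by (auto simp: lists_image)
    then show ?case using SD_points[OF t, of ts] by (auto simp: SDeq_def)
  next
    case (Cons z s)
    have z: "z \<in> span (X ` {0..T})" and s: "s \<in> lists LL" using Cons.prems by (auto simp: LL_def)
    show ?case using z
    proof (induction rule: span_induct_alt)
      case base then show ?case using SDeq_zero_mid by simp
    next
      case (step c x w)
      have "p @ [x] \<in> lists (X ` {0..T})" using Cons.prems(2) step(1) by simp
      then have "SDeq (X t) (p @ x # s)" using Cons.IH[OF s, of "p @ [x]"] by simp
      then show ?case using SDeq_lin_mid step(2) by simp
    qed
  qed
  have step3: "SDeq (X t) zs" if "t \<in> {0..T}" for t using step2[OF that, of zs "[]"] zs by simp
  have "y \<in> span (X ` {0..T})" using y by (simp add: LL_def)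
  then show ?thesis
  proof (induction rule: span_induct_alt)
    case base then show ?case by (simp add: SDeq_def SS_def split_def)
  next
    case (step c x w)
    then show ?case using step3 SDeq_lin_y by auto
  qed
qed

end

context ncs begin

definition M :: "word \<Rightarrow> complex" where "M w = \<phi> (ev X w)"
definition e :: "step \<Rightarrow> step \<Rightarrow> complex" where "e h k = innerH \<phi> X h k"

lemma ev_Nil[simp]: "ev X [] = 1" by (simp add: ev_def)
lemma ev_Cons: "ev X (h # w) = Xh X h * ev X w" by (simp add: ev_def)
lemma ev_append: "ev X (u @ v) = ev X u * ev X v" by (simp add: ev_def)

lemma Xh_Nil[simp]: "Xh X [] = 0" by (simp add: Xh_def)
lemma Xh_Cons: "Xh X ((\<alpha>, a, b) # h) = \<alpha> *\<^sub>R (X b - X a) + Xh X h" by (simp add: Xh_def)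

lemma M_trace: "M (a @ b) = M (b @ a)" by (simp add: M_def ev_append phi_comm)

lemma e_phi: "e h k = \<phi> (Xh X h * Xh X k)"
proof -
  have inner: "\<phi> ((\<alpha> *\<^sub>R (X b - X a)) * Xh X k) = sum_list (map (\<lambda>(\<beta>, c, d). complex_of_real (\<alpha> * \<beta>) *
          (\<phi> (X b * X d) - \<phi> (X b * X c) - \<phi> (X a * X d) + \<phi> (X a * X c))) k)" for \<alpha> a b
  proof (induction k)
    case Nil then show ?case by simp
  next
    case (Cons t k)
    obtain \<beta> c d where t: "t = (\<beta>, c, d)" by (cases t)
    have "(\<alpha> *\<^sub>R (X b - X a)) * Xh X (t # k) = (\<alpha> * \<beta>) *\<^sub>R (X b * X d - X b * X c - X a * X d + X a * X c) + (\<alpha> *\<^sub>R (X b - X a)) * Xh X k"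
      by (simp add: t Xh_Cons algebra_simps)
    then show ?case using Cons.IH by (simp add: t phi_add phi_scaleR phi_diff)
  qed
  show ?thesis
  proof (induction h)
    case Nil then show ?case by (simp add: e_def innerH_def)
  next
    case (Cons s h)
    obtain \<alpha> a b where s: "s = (\<alpha>, a, b)" by (cases s)
    show ?case using Cons.IH inner[of \<alpha> b a] by (simp add: s e_def innerH_def Xh_Cons distrib_right phi_add)
  qed
qed

lemma e_sym: "e h k = e k h" by (simp add: e_phi phi_comm)

lemma Xh_sa: "valid_step T h \<Longrightarrow> st (Xh X h) = Xh X h"
proof (induction h)
  case Nil then show ?case by simp
next
  case (Cons s h)
  obtain \<alpha> a b where s: "s = (\<alpha>, a, b)" by (cases s)
  have v: "a \<in> {0..T}" "b \<in> {0..T}" "valid_step T h" using Cons.prems by (auto simp: s valid_step_def)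
  show ?case using Cons.IH[OF v(3)] by (simp add: s Xh_Cons st_add st_scaleR st_diff X_sa[OF v(1)] X_sa[OF v(2)])
qed

lemma ev_st: "valid_word T w \<Longrightarrow> st (ev X w) = ev X (rev w)"
proof (induction w)
  case Nil then show ?case by (simp add: st_one)
next
  case (Cons h w)
  then have "valid_step T h" "valid_word T w" by (auto simp: valid_word_def)
  then show ?case using Cons.IH by (simp add: ev_Cons ev_append st_mult Xh_sa)
qed

lemma e_real: "valid_step T h \<Longrightarrow> valid_step T k \<Longrightarrow> cnj (e h k) = e h k"
  by (simp add: e_phi phi_st[symmetric] st_mult Xh_sa phi_comm)

lemma M_cnj: "valid_word T w \<Longrightarrow> cnj (M w) = M (rev w)"
  by (simp add: M_def phi_st[symmetric] ev_st)

lemma Xh_LL: "valid_step T h \<Longrightarrow> Xh X h \<in> LL"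
proof (induction h)
  case Nil then show ?case by (simp add: LL_def span_zero)
next
  case (Cons s h)
  obtain \<alpha> a b where s: "s = (\<alpha>, a, b)" by (cases s)
  have v: "a \<in> {0..T}" "b \<in> {0..T}" "valid_step T h" using Cons.prems by (auto simp: s valid_step_def)
  have "X b - X a \<in> LL" unfolding LL_def by (intro span_diff span_base imageI v)
  then show ?case using Cons.IH[OF v(3)] unfolding s Xh_Cons LL_def by (intro span_add span_scale)
qed

lemma SD_words:
  assumes h: "valid_step T h" and w: "valid_word T w"
  shows "M (h # w) = SS w (\<lambda>a y b. e h y * M a * M b)"
proof -
  have "map (Xh X) w \<in> lists LL" using w Xh_LL by (auto simp: valid_word_def)
  then have "SDeq (Xh X h) (map (Xh X) w)" by (intro SD_span Xh_LL h)
  then show ?thesis by (simp add: SDeq_def M_def ev_Cons e_phi SS_map ev_def)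
qed

end

context ncs begin

definition dE :: "word \<Rightarrow> step \<Rightarrow> word \<Rightarrow> 'a" where
  "dE u h v = ev X u * Xh X h * ev X v
     - SS u (\<lambda>a x b. scaleC ii (e x h * M b) (ev X a * ev X v))
     - SS v (\<lambda>a x b. scaleC ii (e x h * M a) (ev X u * ev X b))"

lemma phi_SS: "\<phi> (SS w f) = SS w (\<lambda>a x b. \<phi> (f a x b))"
  by (simp add: SS_def split_def phi_sum_list comp_def)

lemma st_SS: "st (SS w f) = SS w (\<lambda>a x b. st (f a x b))"
  by (simp add: SS_def split_def st_sum_list comp_def)

lemma SS_mult_alg: "SS w f * (y::'a) = SS w (\<lambda>a x b. f a x b * y)"
  by (simp add: SS_def split_def sum_list_mult_const)

lemma SS_diff_alg: "SS w (\<lambda>a x b. f a x b - g a x b) = SS w f - (SS w g :: 'a)"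
  by (rule SS_diff)

lemma phi_scaleC_mult: "\<phi> (scaleC ii c z * y) = c * \<phi> (z * y)"
  by (simp add: scaleC_mult_left phi_scaleC)

lemma vw_append: "valid_word T (u @ v) \<longleftrightarrow> valid_word T u \<and> valid_word T v"
  by (auto simp: valid_word_def)
lemma vw_Cons: "valid_word T (h # v) \<longleftrightarrow> valid_step T h \<and> valid_word T v"
  by (auto simp: valid_word_def)
lemma vw_rev: "valid_word T (rev v) \<longleftrightarrow> valid_word T v"
  by (auto simp: valid_word_def)

lemma duality:
  assumes vu: "valid_word T u" and vh: "valid_step T h" and vv: "valid_word T v" and vw: "valid_word T w"
  shows "\<phi> (dE u h v * ev X w) = SS w (\<lambda>a x b. e h x * M (v @ a) * M (b @ u))"
proof -
  have A: "\<phi> (ev X u * Xh X h * ev X v * ev X w) = M (h # v @ w @ u)"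
    unfolding M_def ev_Cons ev_append using phi_comm[of "ev X u" "Xh X h * ev X v * ev X w"]
    by (simp add: mult.assoc)
  also have "\<dots> = SS (v @ w @ u) (\<lambda>a y b. e h y * M a * M b)"
    using vu vv vw vh by (intro SD_words) (auto simp: vw_append)
  also have "\<dots> = SS v (\<lambda>a y b. e h y * M a * M (b @ w @ u)) + SS w (\<lambda>a y b. e h y * M (v @ a) * M (b @ u))
      + SS u (\<lambda>a y b. e h y * M (v @ w @ a) * M b)"
    by (simp add: SS_append add.assoc)
  finally have A: "\<phi> (ev X u * Xh X h * ev X v * ev X w) = \<dots>" .
  have B: "\<phi> (SS u (\<lambda>a x b. scaleC ii (e x h * M b) (ev X a * ev X v)) * ev X w) = SS u (\<lambda>a y b. e h y * M (v @ w @ a) * M b)"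
    unfolding SS_mult_alg phi_SS phi_scaleC_mult
    using M_trace[of _ "v @ w"] by (simp add: M_def[symmetric] ev_append[symmetric] e_sym[of _ h] mult_ac)
  have C: "\<phi> (SS v (\<lambda>a x b. scaleC ii (e x h * M a) (ev X u * ev X b)) * ev X w) = SS v (\<lambda>a y b. e h y * M a * M (b @ w @ u))"
    unfolding SS_mult_alg phi_SS phi_scaleC_mult
    using M_trace[of u] by (simp add: M_def[symmetric] ev_append[symmetric] e_sym[of _ h] mult_ac)
  show ?thesis
    unfolding dE_def left_diff_distrib phi_diff A B C by simp
qed


lemma SS_mult_alg_left: "(y::'a) * SS w f = SS w (\<lambda>a x b. y * f a x b)"
  by (simp add: SS_def split_def sum_list_const_mult)

lemma pt:
  assumes vu: "valid_word T u" and vv: "valid_word T v" and vr: "valid_word T r" and vs: "valid_word T s"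
    and vh: "valid_step T h" and vk: "valid_step T k"
  shows "\<phi> (dE u h v * dE r k s) = e h k * M (u@s) * M (v@r)
     + SS u (\<lambda>a x b. SS r (\<lambda>a' y b'. e x k * e y h * M (a@s) * M (b@b') * M (v@a')))
     + SS v (\<lambda>a x b. SS s (\<lambda>a' y b'. e x k * e y h * M (u@b') * M (a@a') * M (b@r)))"
proof -
  define Dual where "Dual w = SS w (\<lambda>a x b. e h x * M (v@a) * M (b@u))" for w
  have Y: "dE r k s = ev X (r@k#s) - SS r (\<lambda>a x b. scaleC ii (e x k * M b) (ev X (a@s)))
      - SS s (\<lambda>a x b. scaleC ii (e x k * M a) (ev X (r@b)))"
    by (simp add: dE_def ev_append ev_Cons mult.assoc)
  have D1: "\<phi> (dE u h v * ev X (r@k#s)) = Dual (r@k#s)"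
    unfolding Dual_def using vu vv vr vs vk vh by (intro duality) (auto simp: vw_append vw_Cons)
  have D2: "\<phi> (dE u h v * SS r (\<lambda>a x b. scaleC ii (e x k * M b) (ev X (a@s)))) = SS r (\<lambda>a x b. e x k * M b * Dual (a@s))"
    unfolding SS_mult_alg_left phi_SS scaleC_mult_right phi_scaleC
  proof (rule SS_cong)
    fix a x b assume "r = a @ x # b"
    then have "valid_word T a" using vr by (simp add: vw_append)
    then show "e x k * M b * \<phi> (dE u h v * ev X (a @ s)) = e x k * M b * Dual (a @ s)"
      unfolding Dual_def using vu vv vs vh by (subst duality) (auto simp: vw_append)
  qed
  have D3: "\<phi> (dE u h v * SS s (\<lambda>a x b. scaleC ii (e x k * M a) (ev X (r@b)))) = SS s (\<lambda>a x b. e x k * M a * Dual (r@b))"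
    unfolding SS_mult_alg_left phi_SS scaleC_mult_right phi_scaleC
  proof (rule SS_cong)
    fix a x b assume "s = a @ x # b"
    then have "valid_word T b" using vs by (simp add: vw_append vw_Cons)
    then show "e x k * M a * \<phi> (dE u h v * ev X (r @ b)) = e x k * M a * Dual (r @ b)"
      unfolding Dual_def using vu vv vr vh by (subst duality) (auto simp: vw_append)
  qed
  have "\<phi> (dE u h v * dE r k s) = Dual (r@k#s) - SS r (\<lambda>a x b. e x k * M b * Dual (a@s)) - SS s (\<lambda>a x b. e x k * M a * Dual (r@b))"
    unfolding Y right_diff_distrib phi_diff D1 D2 D3 ..
  also have "\<dots> = e h k * M (u@s) * M (v@r)
     + SS u (\<lambda>a x b. SS r (\<lambda>a' y b'. e x k * e y h * M (a@s) * M (b@b') * M (v@a')))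
     + SS v (\<lambda>a x b. SS s (\<lambda>a' y b'. e x k * e y h * M (u@b') * M (a@a') * M (b@r)))"
  proof (rule abstract_identity[where P = "{h. valid_step T h}"])
    show "M (a @ b) = M (b @ a)" for a b by (rule M_trace)
    show "M (x # w) = SS w (\<lambda>a y b. e x y * M a * M b)" if "x \<in> {h. valid_step T h}" "set w \<subseteq> {h. valid_step T h}" for x w
      using that by (intro SD_words) (auto simp: valid_word_def)
    show "e x y = e y x" for x y by (rule e_sym)
    show "Dual w = SS w (\<lambda>a x b. e h x * M (v @ a) * M (b @ u))" for w by (rule Dual_def)
  qed (use vu vv vr vs vh vk in \<open>auto simp: valid_word_def\<close>)
  finally show ?thesis .
qed

lemma st_dE:
  assumes vu: "valid_word T u" and vv: "valid_word T v" and vk: "valid_step T k"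
  shows "st (dE u k v) = dE (rev v) k (rev u)"
proof -
  have 1: "st (ev X u * Xh X k * ev X v) = ev X (rev v) * Xh X k * ev X (rev u)"
    using vu vv vk by (simp add: st_mult ev_st Xh_sa mult.assoc)
  have 2: "st (SS u (\<lambda>a x b. scaleC ii (e x k * M b) (ev X a * ev X v))) =
      SS (rev u) (\<lambda>a x b. scaleC ii (e x k * M a) (ev X (rev v) * ev X b))"
    unfolding st_SS SS_rev
  proof (rule SS_cong)
    fix a x b assume "u = a @ x # b"
    then have "valid_word T a" "valid_step T x" "valid_word T b" using vu by (auto simp: vw_append vw_Cons)
    then show "st (scaleC ii (e x k * M b) (ev X a * ev X v)) = scaleC ii (e x k * M (rev b)) (ev X (rev v) * ev X (rev a))"
      using vv vk by (simp add: st_scaleC st_mult ev_st e_real M_cnj)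
  qed
  have 3: "st (SS v (\<lambda>a x b. scaleC ii (e x k * M a) (ev X u * ev X b))) =
      SS (rev v) (\<lambda>a x b. scaleC ii (e x k * M b) (ev X a * ev X (rev u)))"
    unfolding st_SS SS_rev
  proof (rule SS_cong)
    fix a x b assume "v = a @ x # b"
    then have "valid_word T a" "valid_step T x" "valid_word T b" using vv by (auto simp: vw_append vw_Cons)
    then show "st (scaleC ii (e x k * M a) (ev X u * ev X b)) = scaleC ii (e x k * M (rev a)) (ev X (rev b) * ev X (rev u))"
      using vu vk by (simp add: st_scaleC st_mult ev_st e_real M_cnj)
  qed
  show ?thesis unfolding dE_def st_diff 1 2 3 by (simp add: diff_diff_eq add.commute)
qed

lemma pt2:
  assumes vu: "valid_word T u" and vv: "valid_word T v" and vu': "valid_word T u'" and vv': "valid_word T v'"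
    and vh: "valid_step T h" and vk: "valid_step T k"
  shows "\<phi> (dE u h v * st (dE u' k v')) = e h k * M (u @ rev u') * M (v @ rev v')
     + SS u (\<lambda>a x b. SS v' (\<lambda>a' y b'. e x k * e y h * M (a @ rev u') * M (b @ rev a') * M (v @ rev b')))
     + SS v (\<lambda>a x b. SS u' (\<lambda>a' y b'. e x k * e y h * M (u @ rev a') * M (a @ rev b') * M (b @ rev v')))"
  unfolding st_dE[OF vu' vv' vk]
  by (subst pt) (use vu vv vu' vv' vh vk in \<open>simp_all add: vw_rev SS_rev\<close>)

end

lemma DXw_eq: "DXw w = map (\<lambda>(a,x,b). ([(1,a,b)], x)) (splits w)"
  by (simp add: DXw_def splits_idx)

lemma sum_list_map_concat: "sum_list (map f (concat xss)) = sum_list (map (\<lambda>xs. sum_list (map f xs)) xss)"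
  by (induction xss) auto

context ncs begin

lemma NF1: "pairH \<phi> X (D1 F) k = concat (map (\<lambda>(c,u,v). map (\<lambda>(a,x,b). (e x k * c, a, b, v)) (splits u)) F)"
  by (induction F) (auto simp: D1_def DXw_eq pairH_def tscale_def e_def split_def comp_def)

lemma NF2: "pairH \<phi> X (D2 F) k = concat (map (\<lambda>(c,u,v). map (\<lambda>(a,x,b). (e x k * c, u, a, b)) (splits v)) F)"
  by (induction F) (auto simp: D2_def DXw_eq pairH_def tscale_def e_def split_def comp_def)

lemma NF3: "pairH \<phi> X (Estar3 (D2 G)) h = concat (map (\<lambda>(d,u,v). map (\<lambda>(a,x,b). (e x h * cnj d, rev u, rev a, rev b)) (splits v)) G)"
  by (induction G) (auto simp: D2_def DXw_eq pairH_def tscale_def e_def Estar3_def t3star_def split_def comp_def)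

lemma NF4: "pairH \<phi> X (Estar3 (D1 G)) h = concat (map (\<lambda>(d,u,v). map (\<lambda>(a,x,b). (e x h * cnj d, rev a, rev b, rev v)) (splits u)) G)"
  by (induction G) (auto simp: D1_def DXw_eq pairH_def tscale_def e_def Estar3_def t3star_def split_def comp_def)

definition dF :: "tensor2 \<Rightarrow> step \<Rightarrow> 'a" where
  "dF F h = sum_list (map (\<lambda>(c,u,v). scaleC ii c (dE u h v)) F)"

lemma idphiid_concat: "idphiid ii \<phi> X (concat xss) = sum_list (map (idphiid ii \<phi> X) xss)"
  by (induction xss) (auto simp: idphiid_def)

lemma idphiid_append: "idphiid ii \<phi> X (A @ B) = idphiid ii \<phi> X A + idphiid ii \<phi> X B"
  by (simp add: idphiid_def)

lemma deltaX_eq: "deltaX ii \<phi> X U = sum_list (map (\<lambda>(F,h). dF F h) U)"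
proof -
  have "sharp ii X F (Xh X h) - idphiid ii \<phi> X (pairH \<phi> X (DX2 F) h) = dF F h" for F h
  proof (induction F)
    case Nil then show ?case by (simp add: sharp_def DX2_def D1_def D2_def pairH_def idphiid_def dF_def)
  next
    case (Cons t F)
    obtain c u v where t: "t = (c,u,v)" by (cases t)
    have s1: "idphiid ii \<phi> X (pairH \<phi> X (D1 [t]) h) = scaleC ii c (SS u (\<lambda>a x b. scaleC ii (e x h * M b) (ev X a * ev X v)))"
      unfolding NF1 by (simp add: t idphiid_def SS_def split_def comp_def scaleC_sum_list scaleC_scaleC M_def mult_ac)
    have s2: "idphiid ii \<phi> X (pairH \<phi> X (D2 [t]) h) = scaleC ii c (SS v (\<lambda>a x b. scaleC ii (e x h * M a) (ev X u * ev X b)))"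
      unfolding NF2 by (simp add: t idphiid_def SS_def split_def comp_def scaleC_sum_list scaleC_scaleC M_def mult_ac)
    have D1c: "D1 (t # F) = D1 [t] @ D1 F" by (simp add: D1_def)
    have D2c: "D2 (t # F) = D2 [t] @ D2 F" by (simp add: D2_def)
    have pa: "pairH \<phi> X (A @ B) h = pairH \<phi> X A h @ pairH \<phi> X B h" for A B by (simp add: pairH_def)
    have "sharp ii X (t # F) (Xh X h) = scaleC ii c (ev X u * Xh X h * ev X v) + sharp ii X F (Xh X h)"
      by (simp add: sharp_def t)
    moreover have "idphiid ii \<phi> X (pairH \<phi> X (DX2 (t # F)) h) =
       idphiid ii \<phi> X (pairH \<phi> X (D1 [t]) h) + idphiid ii \<phi> X (pairH \<phi> X (D2 [t]) h) + idphiid ii \<phi> X (pairH \<phi> X (DX2 F) h)"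
      unfolding DX2_def D1c D2c pa idphiid_append by (simp add: add_ac)
    ultimately show ?case using Cons.IH unfolding s1 s2
      by (simp add: dF_def t dE_def scaleC_diff_right scaleC_add_right algebra_simps)
  qed
  then show ?thesis unfolding deltaX_def by (simp add: split_def)
qed


lemma SS_sum_list_swap: "SS w (\<lambda>a x b. sum_list (map (f a x b) ys)) = sum_list (map (\<lambda>y. SS w (\<lambda>a x b. f a x b y)) ys)"
  unfolding SS_def split_def by (rule sum_list_swap)

lemma phi3_t3mult: "phi3 \<phi> X (t3mult A B) = (\<Sum>(c,u1,u2,u3)\<leftarrow>A. \<Sum>(d,v1,v2,v3)\<leftarrow>B. c * d * (M (u1@v1) * M (u2@v2) * M (u3@v3)))"
  by (simp add: phi3_def t3mult_def sum_list_map_concat split_def comp_def M_def mult_ac)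

lemma phi2_t2mult: "phi2 \<phi> X (t2mult A B) = (\<Sum>(c,u1,u2)\<leftarrow>A. \<Sum>(d,v1,v2)\<leftarrow>B. c * d * (M (u1@v1) * M (u2@v2)))"
  by (simp add: phi2_def t2mult_def sum_list_map_concat split_def comp_def M_def mult_ac)

lemma phi3_1: "phi3 \<phi> X (t3mult (pairH \<phi> X (D1 F) k) (pairH \<phi> X (Estar3 (D2 G)) h)) =
  (\<Sum>(c,u,v)\<leftarrow>F. \<Sum>(d,u',v')\<leftarrow>G. c * cnj d * SS u (\<lambda>a x b. SS v' (\<lambda>a' y b'. e x k * e y h * M (a @ rev u') * M (b @ rev a') * M (v @ rev b'))))"
proof -
  have "phi3 \<phi> X (t3mult (pairH \<phi> X (D1 F) k) (pairH \<phi> X (Estar3 (D2 G)) h)) =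
    (\<Sum>(c,u,v)\<leftarrow>F. SS u (\<lambda>a x b. \<Sum>(d,u',v')\<leftarrow>G. SS v' (\<lambda>a' y b'. (e x k * c) * (e y h * cnj d) * (M (a @ rev u') * M (b @ rev a') * M (v @ rev b')))))"
    unfolding NF1 NF3 phi3_t3mult sum_list_map_concat by (simp add: SS_def split_def comp_def)
  also have "\<dots> = (\<Sum>(c,u,v)\<leftarrow>F. \<Sum>(d,u',v')\<leftarrow>G. c * cnj d * SS u (\<lambda>a x b. SS v' (\<lambda>a' y b'. e x k * e y h * M (a @ rev u') * M (b @ rev a') * M (v @ rev b'))))"
    by (simp add: SS_sum_list_swap SS_cmult mult_ac split_def)
  finally show ?thesis .
qed


lemma phi3_2: "phi3 \<phi> X (t3mult (pairH \<phi> X (D2 F) k) (pairH \<phi> X (Estar3 (D1 G)) h)) =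
  (\<Sum>(c,u,v)\<leftarrow>F. \<Sum>(d,u',v')\<leftarrow>G. c * cnj d * SS v (\<lambda>a x b. SS u' (\<lambda>a' y b'. e x k * e y h * M (u @ rev a') * M (a @ rev b') * M (b @ rev v'))))"
proof -
  have "phi3 \<phi> X (t3mult (pairH \<phi> X (D2 F) k) (pairH \<phi> X (Estar3 (D1 G)) h)) =
    (\<Sum>(c,u,v)\<leftarrow>F. SS v (\<lambda>a x b. \<Sum>(d,u',v')\<leftarrow>G. SS u' (\<lambda>a' y b'. (e x k * c) * (e y h * cnj d) * (M (u @ rev a') * M (a @ rev b') * M (b @ rev v')))))"
    unfolding NF2 NF4 phi3_t3mult sum_list_map_concat by (simp add: SS_def split_def comp_def)
  also have "\<dots> = (\<Sum>(c,u,v)\<leftarrow>F. \<Sum>(d,u',v')\<leftarrow>G. c * cnj d * SS v (\<lambda>a x b. SS u' (\<lambda>a' y b'. e x k * e y h * M (u @ rev a') * M (a @ rev b') * M (b @ rev v'))))"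
    by (simp add: SS_sum_list_swap SS_cmult mult_ac split_def)
  finally show ?thesis .
qed

lemma phi2_part: "phi2 \<phi> X (t2mult F (t2star G)) = (\<Sum>(c,u,v)\<leftarrow>F. \<Sum>(d,u',v')\<leftarrow>G. c * cnj d * (M (u @ rev u') * M (v @ rev v')))"
  by (simp add: phi2_t2mult t2star_def split_def comp_def)

lemma sum_list_mult_alg: "sum_list (map f xs) * (y::'a) = sum_list (map (\<lambda>x. f x * y) xs)"
  by (induction xs) (auto simp: distrib_right)

lemma alg_mult_sum_list: "(y::'a) * sum_list (map f xs) = sum_list (map (\<lambda>x. y * f x) xs)"
  by (induction xs) (auto simp: distrib_left)

lemma dF_prod: "\<phi> (dF F h * st (dF G k)) = (\<Sum>(c,u,v)\<leftarrow>F. \<Sum>(d,u',v')\<leftarrow>G. c * cnj d * \<phi> (dE u h v * st (dE u' k v')))"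
  unfolding dF_def st_sum_list sum_list_mult_alg alg_mult_sum_list phi_sum_list
  by (simp add: split_def st_scaleC scaleC_mult_left scaleC_mult_right scaleC_scaleC phi_scaleC mult_ac) (rule sum_list_swap)

lemma phi2_concat: "phi2 \<phi> X (concat xss) = sum_list (map (phi2 \<phi> X) xss)"
  by (induction xss) (auto simp: phi2_def)
lemma phi3_concat: "phi3 \<phi> X (concat xss) = sum_list (map (phi3 \<phi> X) xss)"
  by (induction xss) (auto simp: phi3_def)
lemma phi3_append: "phi3 \<phi> X (A @ B) = phi3 \<phi> X A + phi3 \<phi> X B"
  by (simp add: phi3_def)
lemma phi2_tscale: "phi2 \<phi> X (tscale c A) = c * phi2 \<phi> X A"
  by (induction A) (auto simp: phi2_def tscale_def split_def distrib_left mult_ac)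

lemma main_FG:
  assumes vF: "\<forall>(c,u,v)\<in>set F. valid_word T u \<and> valid_word T v" and vh: "valid_step T h"
    and vG: "\<forall>(c,u,v)\<in>set G. valid_word T u \<and> valid_word T v" and vk: "valid_step T k"
  shows "\<phi> (dF F h * st (dF G k)) = e h k * phi2 \<phi> X (t2mult F (t2star G))
     + (phi3 \<phi> X (t3mult (pairH \<phi> X (D1 F) k) (pairH \<phi> X (Estar3 (D2 G)) h))
      + phi3 \<phi> X (t3mult (pairH \<phi> X (D2 F) k) (pairH \<phi> X (Estar3 (D1 G)) h)))"
proof -
  have "\<phi> (dF F h * st (dF G k)) = (\<Sum>(c,u,v)\<leftarrow>F. \<Sum>(d,u',v')\<leftarrow>G. c * cnj d * (e h k * M (u @ rev u') * M (v @ rev v')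
     + SS u (\<lambda>a x b. SS v' (\<lambda>a' y b'. e x k * e y h * M (a @ rev u') * M (b @ rev a') * M (v @ rev b')))
     + SS v (\<lambda>a x b. SS u' (\<lambda>a' y b'. e x k * e y h * M (u @ rev a') * M (a @ rev b') * M (b @ rev v')))))"
    unfolding dF_prod
  proof (intro arg_cong[where f=sum_list] map_cong refl)
    fix t assume t: "t \<in> set F"
    obtain c u v where tt: "t = (c,u,v)" by (cases t)
    have vu: "valid_word T u" "valid_word T v" using vF t tt by auto
    show "(case t of (c,u,v) \<Rightarrow> \<Sum>(d,u',v')\<leftarrow>G. c * cnj d * \<phi> (dE u h v * st (dE u' k v'))) =
      (case t of (c,u,v) \<Rightarrow> \<Sum>(d,u',v')\<leftarrow>G. c * cnj d * (e h k * M (u @ rev u') * M (v @ rev v')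
       + SS u (\<lambda>a x b. SS v' (\<lambda>a' y b'. e x k * e y h * M (a @ rev u') * M (b @ rev a') * M (v @ rev b')))
       + SS v (\<lambda>a x b. SS u' (\<lambda>a' y b'. e x k * e y h * M (u @ rev a') * M (a @ rev b') * M (b @ rev v')))))"
      unfolding tt prod.case
    proof (intro arg_cong[where f=sum_list] map_cong refl)
      fix s assume s: "s \<in> set G"
      obtain d u' v' where ss: "s = (d,u',v')" by (cases s)
      have vu': "valid_word T u'" "valid_word T v'" using vG s ss by auto
      show "(case s of (d,u',v') \<Rightarrow> c * cnj d * \<phi> (dE u h v * st (dE u' k v'))) =
        (case s of (d,u',v') \<Rightarrow> c * cnj d * (e h k * M (u @ rev u') * M (v @ rev v')
         + SS u (\<lambda>a x b. SS v' (\<lambda>a' y b'. e x k * e y h * M (a @ rev u') * M (b @ rev a') * M (v @ rev b')))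
         + SS v (\<lambda>a x b. SS u' (\<lambda>a' y b'. e x k * e y h * M (u @ rev a') * M (a @ rev b') * M (b @ rev v')))))"
        unfolding ss prod.case using pt2[OF vu vu' vh vk] by simp
    qed
  qed
  also have "\<dots> = e h k * phi2 \<phi> X (t2mult F (t2star G))
     + (phi3 \<phi> X (t3mult (pairH \<phi> X (D1 F) k) (pairH \<phi> X (Estar3 (D2 G)) h))
      + phi3 \<phi> X (t3mult (pairH \<phi> X (D2 F) k) (pairH \<phi> X (Estar3 (D1 G)) h)))"
    unfolding phi3_1 phi3_2 phi2_part
    by (simp add: split_def distrib_left sum_list_addf sum_list_const_mult[symmetric] mult_ac)
  finally show ?thesis .
qed


lemma main:
  assumes vU: "valid_E2 T U" and vV: "valid_E2 T V"
  shows "\<phi> (deltaX ii \<phi> X U * st (deltaX ii \<phi> X V)) =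
           phi2 \<phi> X (pairHH \<phi> X U (Estar2 V)) + phi3 \<phi> X (TH \<phi> X U V)"
proof -
  have L: "\<phi> (deltaX ii \<phi> X U * st (deltaX ii \<phi> X V)) = (\<Sum>(F,h)\<leftarrow>U. \<Sum>(G,k)\<leftarrow>V. \<phi> (dF F h * st (dF G k)))"
    unfolding deltaX_eq st_sum_list sum_list_mult_alg alg_mult_sum_list phi_sum_list
    by (simp add: split_def) (rule sum_list_swap)
  have R: "phi2 \<phi> X (pairHH \<phi> X U (Estar2 V)) + phi3 \<phi> X (TH \<phi> X U V) =
    (\<Sum>(F,h)\<leftarrow>U. \<Sum>(G,k)\<leftarrow>V. e h k * phi2 \<phi> X (t2mult F (t2star G))
     + (phi3 \<phi> X (t3mult (pairH \<phi> X (D1 F) k) (pairH \<phi> X (Estar3 (D2 G)) h))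
      + phi3 \<phi> X (t3mult (pairH \<phi> X (D2 F) k) (pairH \<phi> X (Estar3 (D1 G)) h))))"
    by (simp add: pairHH_def TH_def phi2_concat phi3_concat phi3_append phi2_tscale Estar2_def split_def comp_def e_def sum_list_addf)
  have "(\<Sum>(F,h)\<leftarrow>U. \<Sum>(G,k)\<leftarrow>V. \<phi> (dF F h * st (dF G k))) =
    (\<Sum>(F,h)\<leftarrow>U. \<Sum>(G,k)\<leftarrow>V. e h k * phi2 \<phi> X (t2mult F (t2star G))
     + (phi3 \<phi> X (t3mult (pairH \<phi> X (D1 F) k) (pairH \<phi> X (Estar3 (D2 G)) h))
      + phi3 \<phi> X (t3mult (pairH \<phi> X (D2 F) k) (pairH \<phi> X (Estar3 (D1 G)) h))))"
  proof (intro arg_cong[where f=sum_list] map_cong refl)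
    fix p assume p: "p \<in> set U"
    obtain F h where pp: "p = (F,h)" by (cases p)
    have vF: "\<forall>(c,u,v)\<in>set F. valid_word T u \<and> valid_word T v" and vh: "valid_step T h"
      using vU p pp unfolding valid_E2_def by auto
    show "(case p of (F,h) \<Rightarrow> \<Sum>(G,k)\<leftarrow>V. \<phi> (dF F h * st (dF G k))) =
      (case p of (F,h) \<Rightarrow> \<Sum>(G,k)\<leftarrow>V. e h k * phi2 \<phi> X (t2mult F (t2star G))
     + (phi3 \<phi> X (t3mult (pairH \<phi> X (D1 F) k) (pairH \<phi> X (Estar3 (D2 G)) h))
      + phi3 \<phi> X (t3mult (pairH \<phi> X (D2 F) k) (pairH \<phi> X (Estar3 (D1 G)) h))))"
      unfolding pp prod.case
    proof (intro arg_cong[where f=sum_list] map_cong refl)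
      fix q assume q: "q \<in> set V"
      obtain G k where qq: "q = (G,k)" by (cases q)
      have vG: "\<forall>(c,u,v)\<in>set G. valid_word T u \<and> valid_word T v" and vk: "valid_step T k"
        using vV q qq unfolding valid_E2_def by auto
      show "(case q of (G,k) \<Rightarrow> \<phi> (dF F h * st (dF G k))) =
        (case q of (G,k) \<Rightarrow> e h k * phi2 \<phi> X (t2mult F (t2star G))
         + (phi3 \<phi> X (t3mult (pairH \<phi> X (D1 F) k) (pairH \<phi> X (Estar3 (D2 G)) h))
          + phi3 \<phi> X (t3mult (pairH \<phi> X (D2 F) k) (pairH \<phi> X (Estar3 (D1 G)) h))))"
        unfolding qq prod.case by (rule main_FG[OF vF vh vG vk])
    qed
  qed
  then show ?thesis using L R by simp
qed

end

theorem mainTheorem3: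
  fixes ii :: "'a::{real_normed_algebra_1,banach}"
    and st :: "'a \<Rightarrow> 'a" and \<phi> :: "'a \<Rightarrow> complex"
    and X :: "real \<Rightarrow> 'a" and T :: real
    and U V :: "(tensor2 \<times> step) list"
  assumes "T > 0"
    and "nc_prob_space ii st \<phi>"
    and "semicircular_process T st \<phi> X"
    and "valid_E2 T U" and "valid_E2 T V"
  shows "\<phi> (deltaX ii \<phi> X U * st (deltaX ii \<phi> X V)) =
           phi2 \<phi> X (pairHH \<phi> X U (Estar2 V)) + phi3 \<phi> X (TH \<phi> X U V)"
proof -
  interpret ncs ii st \<phi> X T using assms(2,3) by unfold_locales
  show ?thesis using assms(4,5) by (rule main)
qed


end
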